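(* Let $\sigma_5=e^{-\pi i/9}\frac{\sqrt5+i\sqrt3}{2}$. (i) The group $\Gamma=\mathcal{S}(2,\sigma_5)$ is generated by $\mathrm{Stab}_\Gamma(m(P^5))\cup\mathrm{Stab}_\Gamma(m(B))$, where $P=R_1J$ and $B=R_2R_3^{-1}R_2^{-1}R_1R_2R_3R_2^{-1}$. (ii) The group $\Gamma=\mathcal{S}(4,\sigma_5)$ is generated by $\mathrm{Stab}_\Gamma(m(R_1))\cup\mathrm{Stab}_\Gamma(m(A))$, where $A$ can be taken to be any one of $(R_1R_2R_3R_2^{-1})^5$, $(R_1R_3^{-1}R_2R_3)^5$, $(R_1R_2^{-1}R_1^{-1}R_3R_1R_2)^5$, $(R_1R_3R_1R_2R_1^{-1}R_3^{-1})^5$.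
   Context: Let $p\ge2$ be an integer and $\tau\in\mathbb{C}$. Set $u=e^{2\pi i/(3p)}$, $\alpha=2-u^3-\bar u^3$, $\beta=(\bar u^2-u)\tau$ and $H=\begin{pmatrix}\alpha&\beta&\bar\beta\\ \bar\beta&\alpha&\beta\\ \beta&\bar\beta&\alpha\end{pmatrix}$, a Hermitian matrix (of signature $(2,1)$ for the parameters considered) defining the form $\langle X,Y\rangle=Y^*HX$. Let $R_1=\begin{pmatrix}u^2&\tau&-u\bar\tau\\0&\bar u&0\\0&0&\bar u\end{pmatrix}$, $J=\begin{pmatrix}0&0&1\\1&0&0\\0&1&0\end{pmatrix}$, $R_2=JR_1J^{-1}$, $R_3=JR_2J^{-1}$. The group $\mathcal{S}(p,\tau)$ is the subgroup of $U(H)$ generated by $R_1$ and $J$, acting on $H^2_{\mathbb{C}}=\{[X]:\langle X,X\rangle<0\}$ through its image in $PU(H)$; all statements refer to this image. The elements $P^5$, $B$, $R_1$ and the listed $A$ are complex reflections (non-identity elements fixing pointwise a complex line) in the relevant groups; for such an element $A$, $m(A)$ denotes its mirror (fixed complex line), and $\mathrm{Stab}_\Gamma(m)$ is the setwise stabilizer of $m$ in $\Gamma$. *)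

theory Defs
  imports "HOL-Analysis.Analysis"
begin

type_synonym cmat = "complex^3^3"
type_synonym cvec = "complex^3"

definition uu :: "nat \<Rightarrow> complex" where
  "uu p = exp (2 * pi * \<i> / (3 * of_nat p))"

definition alphaS :: "nat \<Rightarrow> complex" where
  "alphaS p = 2 - (uu p)^3 - (cnj (uu p))^3"

definition betaS :: "nat \<Rightarrow> complex \<Rightarrow> complex" where
  "betaS p \<tau> = ((cnj (uu p))^2 - uu p) * \<tau>"

definition Hmat :: "nat \<Rightarrow> complex \<Rightarrow> cmat" where
  "Hmat p \<tau> = (let a = alphaS p; b = betaS p \<tau> in
     vector [vector [a, b, cnj b], vector [cnj b, a, b], vector [b, cnj b, a]])"

definition hform :: "cmat \<Rightarrow> cvec \<Rightarrow> cvec \<Rightarrow> complex" where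
  "hform H X Y = (\<Sum>i\<in>UNIV. \<Sum>j\<in>UNIV. cnj (Y $ i) * (H $ i $ j) * (X $ j))"

definition R1m :: "nat \<Rightarrow> complex \<Rightarrow> cmat" where
  "R1m p \<tau> = (let u = uu p in
     vector [vector [u^2, \<tau>, - u * cnj \<tau>], vector [0, cnj u, 0], vector [0, 0, cnj u]])"

definition Jm :: cmat where
  "Jm = vector [vector [0, 0, 1], vector [1, 0, 0], vector [0, 1, 0]]"

definition R2m :: "nat \<Rightarrow> complex \<Rightarrow> cmat" where
  "R2m p \<tau> = Jm ** R1m p \<tau> ** matrix_inv Jm"

definition R3m :: "nat \<Rightarrow> complex \<Rightarrow> cmat" where
  "R3m p \<tau> = Jm ** R2m p \<tau> ** matrix_inv Jm"

definition mpow :: "cmat \<Rightarrow> nat \<Rightarrow> cmat" where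
  "mpow M n = (((**) M) ^^ n) (mat 1)"

inductive_set gen_grp :: "cmat set \<Rightarrow> cmat set" for S where
  gen_one: "mat 1 \<in> gen_grp S"
| gen_mult: "g \<in> S \<Longrightarrow> h \<in> gen_grp S \<Longrightarrow> g ** h \<in> gen_grp S"
| gen_inv: "g \<in> S \<Longrightarrow> h \<in> gen_grp S \<Longrightarrow> matrix_inv g ** h \<in> gen_grp S"

text \<open>The group S(p,tau) (as a matrix group; it acts on complex hyperbolic space
  through its image in PU(H)).\<close>
definition Sgrp :: "nat \<Rightarrow> complex \<Rightarrow> cmat set" where
  "Sgrp p \<tau> = gen_grp {R1m p \<tau>, Jm}"

text \<open>Complex hyperbolic plane as the cone of negative vectors; a point [X] is
  represented by all its (nonzero) lifts.\<close>
definition negcone :: "cmat \<Rightarrow> cvec set" where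
  "negcone H = {X. Re (hform H X X) < 0 \<and> hform H X X \<in> \<real>}"

text \<open>Mirror of a complex reflection: its fixed point set in H^2_C, i.e. the
  negative vectors X with A X a scalar multiple of X (so [AX] = [X]).\<close>
definition mirror :: "cmat \<Rightarrow> cmat \<Rightarrow> cvec set" where
  "mirror H A = {X \<in> negcone H. \<exists>c. A *v X = c *s X}"

definition stab :: "cmat set \<Rightarrow> cvec set \<Rightarrow> cmat set" where
  "stab G m = {g \<in> G. (\<lambda>X. g *v X) ` m = m}"

definition sigma5 :: complex where
  "sigma5 = exp (- pi * \<i> / 9) * ((sqrt 5 + \<i> * sqrt 3) / 2)"

end

theory Submission
  imports Defs
begin

definition zc :: complex where "zc = uu 4"
definition ww :: complex where "ww = uu 2"
definition fc :: complex where "fc = complex_of_real ((1 + sqrt 5) / 2)"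
definition cc :: complex where "cc = exp (- pi * \<i> / 9)"
definition TT :: complex where "TT = (complex_of_real (sqrt 5) + \<i> * complex_of_real (sqrt 3)) / 2"

lemma ww_explicit: "ww = Complex (1/2) (sqrt 3 / 2)"
proof -
  have "ww = exp (\<i> * complex_of_real (pi / 3))"
    unfolding ww_def uu_def by (simp add: field_simps)
  also have "\<dots> = cis (pi / 3)" by (simp add: cis_conv_exp)
  also have "\<dots> = Complex (1/2) (sqrt 3 / 2)"
    by (simp add: complex_eq_iff cos_60 sin_60)
  finally show ?thesis .
qed

lemma zc_sq: "zc^2 = ww"
proof -
  have "zc^2 = exp (2 * (2 * pi * \<i> / 12))"
    unfolding zc_def uu_def power2_eq_square exp_add[symmetric] by (simp add: field_simps)
  also have "\<dots> = ww" unfolding ww_def uu_def by (simp add: field_simps)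
  finally show ?thesis .
qed

lemma ww_sq: "ww^2 = ww - 1"
  unfolding ww_explicit by (simp add: complex_eq_iff power2_eq_square field_simps)

lemma zc4: "zc^4 = zc^2 - 1"
proof -
  have "zc^4 = (zc^2)^2" by simp
  then show ?thesis using zc_sq ww_sq by simp
qed

lemma fc2: "fc^2 = fc + 1"
proof -
  have "((1 + sqrt 5) / 2)^2 = (1 + sqrt 5) / 2 + (1::real)"
    by (simp add: power2_eq_square field_simps)
  then have "complex_of_real (((1 + sqrt 5) / 2)^2) = complex_of_real ((1 + sqrt 5) / 2 + 1)" by simp
  then show ?thesis by (simp add: fc_def)
qed

lemma cnj_fc: "cnj fc = fc"
  unfolding fc_def by simp

lemma zc_cnj_mult: "zc * cnj zc = 1"
proof -
  have "zc * cnj zc = exp (2 * pi * \<i> / 12) * exp (- (2 * pi * \<i> / 12))"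
    unfolding zc_def uu_def by (simp add: exp_cnj)
  then show ?thesis by (simp only: exp_minus_inverse)
qed

lemma cnj_zc: "cnj zc = zc - zc^3"
proof -
  have "cnj zc = cnj zc * (zc^2 - zc^4)" using zc4 by simp
  also have "\<dots> = (zc * cnj zc) * (zc - zc^3)" by (simp add: algebra_simps power_numeral_reduce)
  finally show ?thesis using zc_cnj_mult by simp
qed

lemma cc_cnj_mult: "cc * cnj cc = 1"
proof -
  have "cc * cnj cc = exp (- pi * \<i> / 9) * exp (- (- pi * \<i> / 9))"
    unfolding cc_def by (simp add: exp_cnj)
  then show ?thesis by (simp only: exp_minus_inverse)
qed

lemma cc_nz: "cc \<noteq> 0" unfolding cc_def by simp

lemma cc3: "cc^3 = cnj ww"
proof -
  have "cc^3 = exp (of_nat 3 * (- pi * \<i> / 9))" unfolding cc_def exp_of_nat_mult ..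
  also have "\<dots> = exp (cnj (2 * pi * \<i> / (3 * of_nat 2)))" by (simp add: field_simps)
  also have "\<dots> = cnj ww" unfolding ww_def uu_def exp_cnj ..
  finally show ?thesis .
qed

lemma cnj_ww: "cnj ww = 1 - ww"
  unfolding ww_explicit by (simp add: complex_eq_iff)

lemma TT_eq: "TT = fc + zc^2 - 1"
  unfolding TT_def fc_def zc_sq ww_explicit by (simp add: complex_eq_iff field_simps)

lemma sigma5_eq: "sigma5 = cc * TT"
  unfolding sigma5_def cc_def TT_def by simp

lemma uu4: "uu 4 = zc" unfolding zc_def ..
lemma uu2: "uu 2 = zc^2" unfolding zc_sq ww_def ..

section \<open>Exact arithmetic in Z[zeta12, golden ratio]\<close>

datatype K = K int int int int int int int int

fun ev :: "K \<Rightarrow> complex" where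
  "ev (K a0 a1 a2 a3 a4 a5 a6 a7) =
     (of_int a0 + of_int a1 * zc + of_int a2 * zc^2 + of_int a3 * zc^3)
   + (of_int a4 + of_int a5 * zc + of_int a6 * zc^2 + of_int a7 * zc^3) * fc"

fun kmul :: "K \<Rightarrow> K \<Rightarrow> K" where
  "kmul (K a0 a1 a2 a3 a4 a5 a6 a7) (K b0 b1 b2 b3 b4 b5 b6 b7) = K (a0*b0 - a1*b3 - a2*b2 - a3*b1 - a3*b3 + a4*b4 - a5*b7 - a6*b6 - a7*b5 - a7*b7) (a0*b1 + a1*b0 - a2*b3 - a3*b2 + a4*b5 + a5*b4 - a6*b7 - a7*b6) (a0*b2 + a1*b1 + a1*b3 + a2*b0 + a2*b2 + a3*b1 + a4*b6 + a5*b5 + a5*b7 + a6*b4 + a6*b6 + a7*b5) (a0*b3 + a1*b2 + a2*b1 + a2*b3 + a3*b0 + a3*b2 + a4*b7 + a5*b6 + a6*b5 + a6*b7 + a7*b4 + a7*b6) (a0*b4 - a1*b7 - a2*b6 - a3*b5 - a3*b7 + a4*b0 + a4*b4 - a5*b3 - a5*b7 - a6*b2 - a6*b6 - a7*b1 - a7*b3 - a7*b5 - a7*b7) (a0*b5 + a1*b4 - a2*b7 - a3*b6 + a4*b1 + a4*b5 + a5*b0 + a5*b4 - a6*b3 - a6*b7 - a7*b2 - a7*b6) (a0*b6 + a1*b5 + a1*b7 + a2*b4 + a2*b6 + a3*b5 + a4*b2 + a4*b6 + a5*b1 + a5*b3 + a5*b5 + a5*b7 + a6*b0 + a6*b2 +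 a6*b4 + a6*b6 + a7*b1 + a7*b5) (a0*b7 + a1*b6 + a2*b5 + a2*b7 + a3*b4 + a3*b6 + a4*b3 + a4*b7 + a5*b2 + a5*b6 + a6*b1 + a6*b3 + a6*b5 + a6*b7 + a7*b0 + a7*b2 + a7*b4 + a7*b6)"


fun kadd :: "K \<Rightarrow> K \<Rightarrow> K" where
  "kadd (K a0 a1 a2 a3 a4 a5 a6 a7) (K b0 b1 b2 b3 b4 b5 b6 b7) =
     K (a0+b0) (a1+b1) (a2+b2) (a3+b3) (a4+b4) (a5+b5) (a6+b6) (a7+b7)"

fun kconj :: "K \<Rightarrow> K" where
  "kconj (K a0 a1 a2 a3 a4 a5 a6 a7) = K (a0+a2) a1 (-a2) (-a1-a3) (a4+a6) a5 (-a6) (-a5-a7)"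

lemma kmul_generic:
  fixes z f x0 x1 x2 x3 x4 x5 x6 x7 y0 y1 y2 y3 y4 y5 y6 y7 :: complex
  assumes "z^4 = z^2 - 1" "f^2 = f + 1"
  shows "((x0*y0 - x1*y3 - x2*y2 - x3*y1 - x3*y3 + x4*y4 - x5*y7 - x6*y6 - x7*y5 - x7*y7) + (x0*y1 + x1*y0 - x2*y3 - x3*y2 + x4*y5 + x5*y4 - x6*y7 - x7*y6) * z + (x0*y2 + x1*y1 + x1*y3 + x2*y0 + x2*y2 + x3*y1 + x4*y6 + x5*y5 + x5*y7 + x6*y4 + x6*y6 + x7*y5) * z^2 + (x0*y3 + x1*y2 + x2*y1 + x2*y3 + x3*y0 + x3*y2 + x4*y7 + x5*y6 + x6*y5 + x6*y7 + x7*y4 + x7*y6) * z^3) + ((x0*y4 - x1*y7 - x2*y6 - x3*y5 - x3*y7 + x4*y0 + x4*y4 - x5*y3 - x5*y7 - x6*y2 - x6*y6 - x7*y1 - x7*y3 - x7*y5 - x7*y7) + (x0*y5 + x1*y4 - x2*y7 - x3*y6 + x4*y1 + x4*y5 + x5*y0 + x5*y4 - x6*y3 - x6*y7 - x7*y2 - x7*y6) * z + (x0*y6 + x1*y5 + x1*y7 + x2*y4 + x2*y6 + x3*y5 + x4*y2 + x4*y6 + x5*y1 + x5*y3 + x5*y5 + x5*y7 + x6*y0 + x6*y2 + x6*y4 + x6*y6 + x7*y1 + x7*y5) * z^2 + (x0*y7 + x1*y6 + x2*y5 + x2*y7 + x3*y4 + x3*y6 + x4*y3 + x4*y7 + x5*y2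 + x5*y6 + x6*y1 + x6*y3 + x6*y5 + x6*y7 + x7*y0 + x7*y2 + x7*y4 + x7*y6) * z^3) * f = ((x0 + x1 * z + x2 * z^2 + x3 * z^3) + (x4 + x5 * z + x6 * z^2 + x7 * z^3) * f) * ((y0 + y1 * z + y2 * z^2 + y3 * z^3) + (y4 + y5 * z + y6 * z^2 + y7 * z^3) * f)"
  using assms by algebra


lemma ev_kadd: "ev (kadd a b) = ev a + ev b"
  by (cases a; cases b) (simp add: algebra_simps)

lemma ev_kmul: "ev (kmul a b) = ev a * ev b"
proof (cases a; cases b)
  fix a0 a1 a2 a3 a4 a5 a6 a7 b0 b1 b2 b3 b4 b5 b6 b7
  assume "a = K a0 a1 a2 a3 a4 a5 a6 a7" "b = K b0 b1 b2 b3 b4 b5 b6 b7"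
  then show ?thesis using kmul_generic[OF zc4 fc2] by simp
qed

lemma kconj_generic:
  fixes z f x0 x1 x2 x3 x4 x5 x6 x7 :: complex
  assumes "z^4 = z^2 - 1"
  shows "((x0 + x1 * (z - z^3) + x2 * (z - z^3)^2 + x3 * (z - z^3)^3)
        + (x4 + x5 * (z - z^3) + x6 * (z - z^3)^2 + x7 * (z - z^3)^3) * f)
       = ((x0 + x2) + x1 * z + (- x2) * z^2 + (- x1 - x3) * z^3)
        + ((x4 + x6) + x5 * z + (- x6) * z^2 + (- x5 - x7) * z^3) * f"
  using assms by algebra

lemma ev_kconj: "ev (kconj a) = cnj (ev a)"
proof (cases a)
  fix a0 a1 a2 a3 a4 a5 a6 a7
  assume "a = K a0 a1 a2 a3 a4 a5 a6 a7"
  then show ?thesis using kconj_generic[OF zc4, of "of_int a0" "of_int a1" "of_int a2" "of_int a3"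
      "of_int a4" "of_int a5" "of_int a6" "of_int a7" fc]
    by (simp add: cnj_zc cnj_fc)
qed

section \<open>3x3 matrices over K, conjugated by diag(1, cnj cc, cc)\<close>

datatype M3 = M3 K K K K K K K K K

fun mmul :: "M3 \<Rightarrow> M3 \<Rightarrow> M3" where
  "mmul (M3 a11 a12 a13 a21 a22 a23 a31 a32 a33) (M3 b11 b12 b13 b21 b22 b23 b31 b32 b33) =
   M3 (kadd (kadd (kmul a11 b11) (kmul a12 b21)) (kmul a13 b31))
      (kadd (kadd (kmul a11 b12) (kmul a12 b22)) (kmul a13 b32))
      (kadd (kadd (kmul a11 b13) (kmul a12 b23)) (kmul a13 b33))
      (kadd (kadd (kmul a21 b11) (kmul a22 b21)) (kmul a23 b31))
      (kadd (kadd (kmul a21 b12) (kmul a22 b22)) (kmul a23 b32))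
      (kadd (kadd (kmul a21 b13) (kmul a22 b23)) (kmul a23 b33))
      (kadd (kadd (kmul a31 b11) (kmul a32 b21)) (kmul a33 b31))
      (kadd (kadd (kmul a31 b12) (kmul a32 b22)) (kmul a33 b32))
      (kadd (kadd (kmul a31 b13) (kmul a32 b23)) (kmul a33 b33))"

fun evMD :: "int \<Rightarrow> M3 \<Rightarrow> cmat" where
  "evMD e (M3 a11 a12 a13 a21 a22 a23 a31 a32 a33) =
    vector [vector [cc powi e * ev a11, cc powi e * ev a12 * cc, cc powi e * ev a13 * cnj cc],
            vector [cc powi e * cnj cc * ev a21, cc powi e * cnj cc * ev a22 * cc, cc powi e * cnj cc * ev a23 * cnj cc],
            vector [cc powi e * cc * ev a31, cc powi e * cc * ev a32 * cc, cc powi e * cc * ev a33 * cnj cc]]"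

lemma evMD_mult: "evMD e1 A ** evMD e2 B = evMD (e1 + e2) (mmul A B)"
proof (cases A; cases B)
  fix a11 a12 a13 a21 a22 a23 a31 a32 a33 b11 b12 b13 b21 b22 b23 b31 b32 b33
  assume A: "A = M3 a11 a12 a13 a21 a22 a23 a31 a32 a33" and B: "B = M3 b11 b12 b13 b21 b22 b23 b31 b32 b33"
  have c: "cc * cnj cc = 1" by (rule cc_cnj_mult)
  have p: "cc powi (e1 + e2) = cc powi e1 * cc powi e2" by (simp add: power_int_add cc_nz)
  show ?thesis unfolding A B
    by (simp add: vec_eq_iff forall_3 matrix_matrix_mult_def sum_3 ev_kadd ev_kmul p; use c in algebra)
qed

definition kz :: K where "kz = K 0 0 0 0 0 0 0 0"
definition ko :: K where "ko = K 1 0 0 0 0 0 0 0"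
definition mid :: M3 where "mid = M3 ko kz kz kz ko kz kz kz ko"

lemma evMD_mid: "evMD 0 mid = mat 1"
  using cc_cnj_mult
  by (simp add: mid_def kz_def ko_def vec_eq_iff forall_3 mat_def mult.commute)

datatype lt = La | LA | Lj | LJ

fun gd2 :: "lt \<Rightarrow> M3" where
  "gd2 La = (M3 (K (-1) 0 1 0 0 0 0 0) (K (-1) 0 1 0 1 0 0 0) (K (-1) 0 1 0 0 0 (-1) 0) (K 0 0 0 0 0 0 0 0) (K 1 0 (-1) 0 0 0 0 0) (K 0 0 0 0 0 0 0 0) (K 0 0 0 0 0 0 0 0) (K 0 0 0 0 0 0 0 0) (K 1 0 (-1) 0 0 0 0 0))" |
  "gd2 LA = (M3 (K 0 0 (-1) 0 0 0 0 0) (K 0 0 (-1) 0 (-1) 0 1 0) (K 0 0 (-1) 0 1 0 0 0) (K 0 0 0 0 0 0 0 0) (K 0 0 1 0 0 0 0 0) (K 0 0 0 0 0 0 0 0) (K 0 0 0 0 0 0 0 0) (K 0 0 0 0 0 0 0 0) (K 0 0 1 0 0 0 0 0))" |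
  "gd2 Lj = (M3 (K 0 0 0 0 0 0 0 0) (K 0 0 0 0 0 0 0 0) (K 1 0 0 0 0 0 0 0) (K 1 0 0 0 0 0 0 0) (K 0 0 0 0 0 0 0 0) (K 0 0 0 0 0 0 0 0) (K 0 0 0 0 0 0 0 0) (K 0 0 1 0 0 0 0 0) (K 0 0 0 0 0 0 0 0))" |
  "gd2 LJ = (M3 (K 0 0 0 0 0 0 0 0) (K 1 0 0 0 0 0 0 0) (K 0 0 0 0 0 0 0 0) (K 0 0 0 0 0 0 0 0) (K 0 0 0 0 0 0 0 0) (K 1 0 (-1) 0 0 0 0 0) (K 1 0 0 0 0 0 0 0) (K 0 0 0 0 0 0 0 0) (K 0 0 0 0 0 0 0 0))"

fun gd4 :: "lt \<Rightarrow> M3" where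
  "gd4 La = (M3 (K 0 0 1 0 0 0 0 0) (K (-1) 0 1 0 1 0 0 0) (K 0 0 0 1 0 (-1) 0 0) (K 0 0 0 0 0 0 0 0) (K 0 1 0 (-1) 0 0 0 0) (K 0 0 0 0 0 0 0 0) (K 0 0 0 0 0 0 0 0) (K 0 0 0 0 0 0 0 0) (K 0 1 0 (-1) 0 0 0 0))" |
  "gd4 LA = (M3 (K 1 0 (-1) 0 0 0 0 0) (K 0 0 0 (-1) 0 (-1) 0 1) (K 0 0 (-1) 0 1 0 0 0) (K 0 0 0 0 0 0 0 0) (K 0 1 0 0 0 0 0 0) (K 0 0 0 0 0 0 0 0) (K 0 0 0 0 0 0 0 0) (K 0 0 0 0 0 0 0 0) (K 0 1 0 0 0 0 0 0))" |
  "gd4 Lj = (M3 (K 0 0 0 0 0 0 0 0) (K 0 0 0 0 0 0 0 0) (K 1 0 0 0 0 0 0 0) (K 1 0 0 0 0 0 0 0) (K 0 0 0 0 0 0 0 0) (K 0 0 0 0 0 0 0 0) (K 0 0 0 0 0 0 0 0) (K 0 0 1 0 0 0 0 0) (K 0 0 0 0 0 0 0 0))" |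
  "gd4 LJ = (M3 (K 0 0 0 0 0 0 0 0) (K 1 0 0 0 0 0 0 0) (K 0 0 0 0 0 0 0 0) (K 0 0 0 0 0 0 0 0) (K 0 0 0 0 0 0 0 0) (K 1 0 (-1) 0 0 0 0 0) (K 1 0 0 0 0 0 0 0) (K 0 0 0 0 0 0 0 0) (K 0 0 0 0 0 0 0 0))"

definition gd :: "nat \<Rightarrow> lt \<Rightarrow> M3" where "gd p l = (if p = 2 then gd2 l else gd4 l)"

fun ge :: "lt \<Rightarrow> int" where
  "ge La = 0" | "ge LA = 0" | "ge Lj = 1" | "ge LJ = -1"

fun gm :: "nat \<Rightarrow> lt \<Rightarrow> cmat" where
  "gm p La = R1m p sigma5" | "gm p LA = matrix_inv (R1m p sigma5)"
| "gm p Lj = Jm" | "gm p LJ = matrix_inv Jm"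

definition wm :: "nat \<Rightarrow> lt list \<Rightarrow> cmat" where
  "wm p ws = foldr (\<lambda>l M. gm p l ** M) ws (mat 1)"

definition wd :: "nat \<Rightarrow> lt list \<Rightarrow> M3" where
  "wd p ws = foldr (\<lambda>l M. mmul (gd p l) M) ws mid"

definition we :: "lt list \<Rightarrow> int" where
  "we ws = sum_list (map ge ws)"

lemma matrix_inv_eq:
  fixes A B :: "complex^3^3"
  assumes "A ** B = mat 1"
  shows "matrix_inv A = B"
proof -
  have BA: "B ** A = mat 1" using assms matrix_left_right_inverse by blast
  have ex: "\<exists>A'. A ** A' = mat 1 \<and> A' ** A = mat 1" using assms BA by blast
  define A' where "A' = matrix_inv A"
  have A': "A ** A' = mat 1 \<and> A' ** A = mat 1"
    unfolding A'_def matrix_inv_def using someI_ex[OF ex] by blast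
  have "A' = A' ** (A ** B)" using assms by simp
  also have "\<dots> = (A' ** A) ** B" by (simp add: matrix_mul_assoc)
  also have "\<dots> = B" using A' by simp
  finally show ?thesis unfolding A'_def .
qed

lemma R1_letter:
  assumes "p = 2 \<or> p = 4"
  shows "R1m p sigma5 = evMD 0 (gd p La)"
  using assms
proof
  assume p: "p = 2"
  show ?thesis unfolding p using zc4 cc_cnj_mult
    apply (simp add: Let_def R1m_def gd_def vec_eq_iff forall_3 sigma5_eq TT_eq cnj_zc cnj_fc uu2)
    apply (intro conjI)
    apply algebra+
    done
next
  assume p: "p = 4"
  show ?thesis unfolding p using zc4 cc_cnj_mult
    apply (simp add: Let_def R1m_def gd_def vec_eq_iff forall_3 sigma5_eq TT_eq cnj_zc cnj_fc uu4)
    apply (intro conjI)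
    apply algebra+
    done
qed

lemma J_letter: "Jm = evMD 1 (gd p Lj)"
proof -
  have c3: "cc^3 = 1 - ww" using cc3 cnj_ww by simp
  have "cc^3 * zc^2 = 1" using c3 zc_sq ww_sq by algebra
  then show ?thesis using cc_cnj_mult
    by (simp add: Jm_def gd_def vec_eq_iff forall_3; algebra)
qed

lemma R1inv_letter:
  assumes "p = 2 \<or> p = 4"
  shows "matrix_inv (R1m p sigma5) = evMD 0 (gd p LA)"
proof (rule matrix_inv_eq)
  have "mmul (gd p La) (gd p LA) = mid" using assms by (auto simp: gd_def mid_def kz_def ko_def)
  then show "R1m p sigma5 ** evMD 0 (gd p LA) = mat 1"
    using R1_letter[OF assms] evMD_mult[of 0 "gd p La" 0 "gd p LA"] evMD_mid by simp
qed

lemma Jinv_letter: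
  assumes "p = 2 \<or> p = 4"
  shows "matrix_inv Jm = evMD (-1) (gd p LJ)"
proof (rule matrix_inv_eq)
  have "mmul (gd p Lj) (gd p LJ) = mid" using assms by (auto simp: gd_def mid_def kz_def ko_def)
  then show "Jm ** evMD (-1) (gd p LJ) = mat 1"
    using J_letter[of p] evMD_mult[of 1 "gd p Lj" "-1" "gd p LJ"] evMD_mid by simp
qed

lemma gm_letter:
  assumes "p = 2 \<or> p = 4"
  shows "gm p l = evMD (ge l) (gd p l)"
  using R1_letter[OF assms] R1inv_letter[OF assms] J_letter[of p] Jinv_letter[OF assms]
  by (cases l) auto

lemma wm_eq:
  assumes "p = 2 \<or> p = 4"
  shows "wm p ws = evMD (we ws) (wd p ws)"
proof (induction ws)
  case Nil
  then show ?case by (simp add: wm_def wd_def we_def evMD_mid)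
next
  case (Cons l ws)
  have "wm p (l # ws) = gm p l ** wm p ws" by (simp add: wm_def)
  also have "\<dots> = evMD (ge l) (gd p l) ** evMD (we ws) (wd p ws)"
    using Cons gm_letter[OF assms] by simp
  also have "\<dots> = evMD (we (l # ws)) (wd p (l # ws))"
    by (simp add: evMD_mult we_def wd_def)
  finally show ?case .
qed

lemma wm_ident:
  assumes "p = 2 \<or> p = 4" "we w1 = we w2" "wd p w1 = wd p w2"
  shows "wm p w1 = wm p w2"
  using assms wm_eq[OF assms(1)] by metis

lemma wm_append: "wm p (a @ b) = wm p a ** wm p b"
  by (induction a) (simp_all add: wm_def matrix_mul_assoc)

lemma wm_Nil: "wm p [] = mat 1" by (simp add: wm_def)
lemma wm_single: "wm p [l] = gm p l" by (simp add: wm_def)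

definition ctrans :: "cmat \<Rightarrow> cmat" where "ctrans g = (\<chi> i j. cnj (g $ j $ i))"

definition hpres :: "cmat \<Rightarrow> cmat \<Rightarrow> bool" where
  "hpres H g \<longleftrightarrow> (\<forall>X Y. hform H (g *v X) (g *v Y) = hform H X Y)"

lemma hform_mult: "hform H (g *v X) (g *v Y) = hform (ctrans g ** H ** g) X Y"
  by (simp add: hform_def matrix_vector_mult_def matrix_matrix_mult_def ctrans_def sum_3 algebra_simps)

lemma hpres_I: "ctrans g ** H ** g = H \<Longrightarrow> hpres H g"
  unfolding hpres_def using hform_mult by metis

lemma uu_cnj: "uu p * cnj (uu p) = 1"
proof -
  have "uu p * cnj (uu p) = exp (2 * pi * \<i> / (3 * of_nat p)) * exp (- (2 * pi * \<i> / (3 * of_nat p)))"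
    unfolding uu_def by (simp add: exp_cnj)
  then show ?thesis by (simp only: exp_minus_inverse)
qed

lemma R1_unitary: "ctrans (R1m p t) ** Hmat p t ** R1m p t = Hmat p t"
  using uu_cnj[of p]
  apply (simp add: Let_def R1m_def Hmat_def alphaS_def betaS_def vec_eq_iff forall_3
      matrix_matrix_mult_def sum_3 ctrans_def)
  apply (intro conjI)
  apply algebra+
  done

lemma J_unitary: "ctrans Jm ** Hmat p t ** Jm = Hmat p t"
  by (simp add: Let_def Jm_def Hmat_def vec_eq_iff forall_3 matrix_matrix_mult_def sum_3 ctrans_def)

lemma inv_props:
  fixes A :: cmat
  assumes "invertible A"
  shows "A ** matrix_inv A = mat 1" "matrix_inv A ** A = mat 1"
proof -
  have ex: "\<exists>A'. A ** A' = mat 1 \<and> A' ** A = mat 1" using assms unfolding invertible_def by blast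
  show "A ** matrix_inv A = mat 1" "matrix_inv A ** A = mat 1"
    unfolding matrix_inv_def using someI_ex[OF ex] by blast+
qed

lemma invertible_inv: "invertible (A::cmat) \<Longrightarrow> invertible (matrix_inv A)"
  using inv_props unfolding invertible_def by blast

lemma inv_inv: "invertible (A::cmat) \<Longrightarrow> matrix_inv (matrix_inv A) = A"
  using inv_props(2) matrix_inv_eq by blast

lemma inv_mult:
  assumes a: "invertible (A::cmat)" "invertible (B::cmat)"
  shows "matrix_inv (A ** B) = matrix_inv B ** matrix_inv A"
proof (rule matrix_inv_eq)
  have "A ** B ** (matrix_inv B ** matrix_inv A) = A ** (B ** matrix_inv B) ** matrix_inv A"
    by (simp add: matrix_mul_assoc)
  also have "\<dots> = mat 1" using inv_props[OF a(1)] inv_props[OF a(2)] by simp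
  finally show "A ** B ** (matrix_inv B ** matrix_inv A) = mat 1" .
qed

lemma gen_base: "g \<in> S \<Longrightarrow> g \<in> gen_grp S"
  using gen_mult[of g S "mat 1"] gen_one[of S] by simp

lemma gen_mult_closed: "x \<in> gen_grp S \<Longrightarrow> y \<in> gen_grp S \<Longrightarrow> x ** y \<in> gen_grp S"
proof (induction x rule: gen_grp.induct)
  case gen_one then show ?case by simp
next
  case (gen_mult g h) then show ?case by (metis gen_grp.gen_mult matrix_mul_assoc)
next
  case (gen_inv g h) then show ?case by (metis gen_grp.gen_inv matrix_mul_assoc)
qed

lemma gen_inv_closed:
  assumes "\<forall>g\<in>S. invertible g" "x \<in> gen_grp S"
  shows "invertible x \<and> matrix_inv x \<in> gen_grp S"
  using assms(2)
proof (induction x rule: gen_grp.induct)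
  case gen_one
  have "matrix_inv (mat 1 :: cmat) = mat 1" by (rule matrix_inv_eq) simp
  then show ?case using gen_grp.gen_one[of S] by (simp add: invertible_def)
next
  case (gen_mult g h)
  have ig: "invertible g" using assms(1) gen_mult by blast
  have "matrix_inv g \<in> gen_grp S" using gen_grp.gen_inv[OF gen_mult(1) gen_grp.gen_one] by simp
  then show ?case using gen_mult ig invertible_mult inv_mult gen_mult_closed by metis
next
  case (gen_inv g h)
  have ig: "invertible g" using assms(1) gen_inv by blast
  have "g \<in> gen_grp S" using gen_base gen_inv(1) by blast
  then show ?case using gen_inv ig invertible_mult inv_mult gen_mult_closed invertible_inv inv_inv by metis
qed

lemma gen_sub:
  assumes "S \<subseteq> gen_grp T" "\<forall>g\<in>T. invertible g"
  shows "gen_grp S \<subseteq> gen_grp T"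
proof
  fix x assume "x \<in> gen_grp S"
  then show "x \<in> gen_grp T"
  proof (induction x rule: gen_grp.induct)
    case gen_one then show ?case by (rule gen_grp.gen_one)
  next
    case (gen_mult g h) then show ?case using assms gen_mult_closed by blast
  next
    case (gen_inv g h) then show ?case using assms gen_mult_closed gen_inv_closed by blast
  qed
qed

lemma hpres_mult: "hpres H g \<Longrightarrow> hpres H h \<Longrightarrow> hpres H (g ** h)"
  unfolding hpres_def by (simp flip: matrix_vector_mul_assoc)

lemma hpres_inv: "hpres H g \<Longrightarrow> invertible g \<Longrightarrow> hpres H (matrix_inv g)"
  unfolding hpres_def
  by (metis inv_props(1) matrix_vector_mul_assoc matrix_vector_mul_lid)

lemma hpres_one: "hpres H (mat 1)"
  unfolding hpres_def by simp

lemma gen_hpres: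
  assumes "\<forall>g\<in>S. invertible g \<and> hpres H g" "x \<in> gen_grp S"
  shows "hpres H x"
  using assms(2)
proof (induction x rule: gen_grp.induct)
  case gen_one then show ?case by (rule hpres_one)
next
  case (gen_mult g h) then show ?case using assms(1) hpres_mult by blast
next
  case (gen_inv g h) then show ?case using assms(1) hpres_mult hpres_inv by blast
qed

lemma R1_rinv:
  assumes "p = 2 \<or> p = 4"
  shows "R1m p sigma5 ** matrix_inv (R1m p sigma5) = mat 1"
proof -
  have "mmul (gd p La) (gd p LA) = mid" using assms by (auto simp: gd_def mid_def kz_def ko_def)
  then show ?thesis
    using R1_letter[OF assms] R1inv_letter[OF assms] evMD_mult[of 0 "gd p La" 0 "gd p LA"] evMD_mid by simp
qed

lemma J3: "Jm ** Jm ** Jm = mat 1"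
  by (simp add: Jm_def vec_eq_iff forall_3 matrix_matrix_mult_def sum_3 mat_def)

lemma J_rinv: "Jm ** (Jm ** Jm) = mat 1"
  using J3 by (simp add: matrix_mul_assoc)

lemma gens_ok:
  assumes "p = 2 \<or> p = 4"
  shows "\<forall>g\<in>{R1m p sigma5, Jm}. invertible g \<and> hpres (Hmat p sigma5) g"
  using R1_rinv[OF assms] J_rinv hpres_I[OF R1_unitary] hpres_I[OF J_unitary]
  by (auto simp: invertible_right_inverse)

lemma Sgrp_props:
  assumes "p = 2 \<or> p = 4" "g \<in> Sgrp p sigma5"
  shows "invertible g" "hpres (Hmat p sigma5) g" "matrix_inv g \<in> Sgrp p sigma5"
  using gens_ok[OF assms(1)] assms(2) gen_inv_closed[of "{R1m p sigma5, Jm}" g] gen_hpres[of "{R1m p sigma5, Jm}"]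
  unfolding Sgrp_def by blast+

section \<open>Stabilisers of mirrors\<close>

lemma mv_scale: "(h::cmat) *v (c *s X) = c *s (h *v X)"
  by (simp add: vec_eq_iff matrix_vector_mult_def sum_distrib_left algebra_simps)

lemma mirror_map:
  assumes "hpres H h" "h ** A = A ** h" "X \<in> mirror H A"
  shows "h *v X \<in> mirror H A"
proof -
  obtain c where c: "A *v X = c *s X" and n: "X \<in> negcone H" using assms(3) unfolding mirror_def by blast
  have "A *v (h *v X) = (A ** h) *v X" by (simp add: matrix_vector_mul_assoc)
  also have "\<dots> = h *v (A *v X)" using assms(2) by (simp add: matrix_vector_mul_assoc)
  also have "\<dots> = c *s (h *v X)" using c mv_scale by simp
  finally have "A *v (h *v X) = c *s (h *v X)" .
  moreover have "h *v X \<in> negcone H" using n assms(1) unfolding negcone_def hpres_def by simp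
  ultimately show ?thesis unfolding mirror_def by blast
qed

lemma stab_intro:
  assumes p: "p = 2 \<or> p = 4" and g: "g \<in> Sgrp p sigma5" and cm: "g ** A = A ** g"
  shows "g \<in> stab (Sgrp p sigma5) (mirror (Hmat p sigma5) A)"
proof -
  define gi where "gi = matrix_inv g"
  have ig: "invertible g" and hg: "hpres (Hmat p sigma5) g" and gig: "gi \<in> Sgrp p sigma5"
    using Sgrp_props[OF p g] unfolding gi_def by blast+
  have hgi: "hpres (Hmat p sigma5) gi" using Sgrp_props[OF p gig] by blast
  have r: "g ** gi = mat 1" and l: "gi ** g = mat 1" using inv_props[OF ig] unfolding gi_def by blast+
  have cmi: "gi ** A = A ** gi"
  proof -
    have "gi ** A = gi ** A ** (g ** gi)" using r by simp
    also have "\<dots> = gi ** (g ** A) ** gi" using cm by (simp add: matrix_mul_assoc)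
    also have "\<dots> = (gi ** g) ** A ** gi" by (simp add: matrix_mul_assoc)
    also have "\<dots> = A ** gi" using l by simp
    finally show ?thesis .
  qed
  have "(\<lambda>X. g *v X) ` mirror (Hmat p sigma5) A = mirror (Hmat p sigma5) A"
  proof
    show "(\<lambda>X. g *v X) ` mirror (Hmat p sigma5) A \<subseteq> mirror (Hmat p sigma5) A"
      using mirror_map[OF hg cm] by blast
    show "mirror (Hmat p sigma5) A \<subseteq> (\<lambda>X. g *v X) ` mirror (Hmat p sigma5) A"
    proof
      fix X assume X: "X \<in> mirror (Hmat p sigma5) A"
      have "X = g *v (gi *v X)" using r by (simp add: matrix_vector_mul_assoc)
      moreover have "gi *v X \<in> mirror (Hmat p sigma5) A" using mirror_map[OF hgi cmi X] .
      ultimately show "X \<in> (\<lambda>X. g *v X) ` mirror (Hmat p sigma5) A" by blast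
    qed
  qed
  then show ?thesis unfolding stab_def using g by blast
qed

lemma gen_stab_eq:
  assumes p: "p = 2 \<or> p = 4"
    and T: "T \<subseteq> Sgrp p sigma5"
    and r: "R1m p sigma5 \<in> gen_grp T" and j: "Jm \<in> gen_grp T"
  shows "gen_grp T = Sgrp p sigma5"
proof
  have Tinv: "\<forall>g\<in>T. invertible g" using T Sgrp_props[OF p] by blast
  show "gen_grp T \<subseteq> Sgrp p sigma5"
    unfolding Sgrp_def
    by (rule gen_sub) (use T gens_ok[OF p] in \<open>auto simp: Sgrp_def\<close>)
  show "Sgrp p sigma5 \<subseteq> gen_grp T"
    unfolding Sgrp_def by (rule gen_sub) (use r j Tinv in auto)
qed

fun linv :: "lt \<Rightarrow> lt" where
  "linv La = LA" | "linv LA = La" | "linv Lj = LJ" | "linv LJ = Lj"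

definition invw :: "lt list \<Rightarrow> lt list" where "invw ws = rev (map linv ws)"

lemma R1_inv_ok: "p = 2 \<or> p = 4 \<Longrightarrow> invertible (R1m p sigma5)"
  using R1_rinv invertible_right_inverse by blast

lemma J_inv_ok: "invertible Jm"
  using J_rinv invertible_right_inverse by blast

lemma gm_invertible: "p = 2 \<or> p = 4 \<Longrightarrow> invertible (gm p l)"
  using R1_inv_ok J_inv_ok invertible_inv by (cases l) auto

lemma gm_linv: "p = 2 \<or> p = 4 \<Longrightarrow> gm p (linv l) = matrix_inv (gm p l)"
  using R1_inv_ok J_inv_ok inv_inv by (cases l) auto

lemma wm_invertible: "p = 2 \<or> p = 4 \<Longrightarrow> invertible (wm p ws)"
proof (induction ws)
  case Nil
  have "invertible (mat 1 :: cmat)" unfolding invertible_def by (rule exI[of _ "mat 1"]) simp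
  then show ?case by (simp add: wm_def)
next
  case (Cons l ws)
  then have "invertible (wm p ws)" by simp
  then have "invertible (gm p l ** wm p ws)"
    using invertible_mult[OF gm_invertible[OF Cons.prems]] by blast
  then show ?case by (simp add: wm_def)
qed

lemma wm_inv: "p = 2 \<or> p = 4 \<Longrightarrow> matrix_inv (wm p ws) = wm p (invw ws)"
proof (induction ws)
  case Nil
  show ?case by (simp add: wm_def invw_def) (rule matrix_inv_eq, simp)
next
  case (Cons l ws)
  have "matrix_inv (wm p (l # ws)) = matrix_inv (gm p l ** wm p ws)" by (simp add: wm_def)
  also have "\<dots> = matrix_inv (wm p ws) ** matrix_inv (gm p l)"
    using inv_mult gm_invertible wm_invertible Cons.prems by blast
  also have "\<dots> = wm p (invw ws) ** gm p (linv l)" using Cons gm_linv by simp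
  also have "\<dots> = wm p (invw (l # ws))" by (simp add: invw_def wm_append wm_single)
  finally show ?case .
qed

lemma wm_in_S: "wm p ws \<in> Sgrp p sigma5"
proof (induction ws)
  case Nil then show ?case by (simp add: wm_def Sgrp_def gen_one)
next
  case (Cons l ws)
  then show ?case
    by (cases l) (auto simp: wm_def Sgrp_def intro: gen_mult gen_inv)
qed

lemma wm_app_rev: "wm p a ** wm p b = wm p (a @ b)"
  by (simp add: wm_append)

lemma R1_w: "R1m p sigma5 = wm p [La]" by (simp add: wm_def)
lemma J_w: "Jm = wm p [Lj]" by (simp add: wm_def)
lemma R2_w: "R2m p sigma5 = wm p [Lj, La, LJ]" by (simp add: wm_def R2m_def matrix_mul_assoc)
lemma R3_w: "R3m p sigma5 = wm p [Lj, Lj, La, LJ, LJ]" by (simp add: wm_def R3m_def R2m_def matrix_mul_assoc)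
lemma mpow5: "mpow M 5 = M ** M ** M ** M ** M"
  by (simp add: mpow_def numeral_eq_Suc matrix_mul_assoc)

lemma comm_check:
  assumes "p = 2 \<or> p = 4" "we (f @ a) = we (a @ f)" "wd p (f @ a) = wd p (a @ f)"
  shows "wm p f ** wm p a = wm p a ** wm p f"
  using wm_ident[OF assms] by (simp add: wm_append)

lemma concat_gen:
  assumes p: "p = 2 \<or> p = 4"
    and facs: "\<forall>f\<in>set fs. wm p f ** A1 = A1 ** wm p f \<or> wm p f ** A2 = A2 ** wm p f"
  shows "wm p (concat fs) \<in> gen_grp (stab (Sgrp p sigma5) (mirror (Hmat p sigma5) A1)
                                 \<union> stab (Sgrp p sigma5) (mirror (Hmat p sigma5) A2))"
  using facs
proof (induction fs)
  case Nil then show ?case by (simp add: wm_def gen_one)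
next
  case (Cons f fs)
  have "wm p f \<in> stab (Sgrp p sigma5) (mirror (Hmat p sigma5) A1) \<union> stab (Sgrp p sigma5) (mirror (Hmat p sigma5) A2)"
    using Cons.prems stab_intro[OF p wm_in_S] by auto
  then have "wm p f \<in> gen_grp (stab (Sgrp p sigma5) (mirror (Hmat p sigma5) A1) \<union> stab (Sgrp p sigma5) (mirror (Hmat p sigma5) A2))"
    by (rule gen_base)
  then show ?case using Cons gen_mult_closed by (simp add: wm_append)
qed

lemma stabs_sub: "stab G m1 \<union> stab G m2 \<subseteq> G" unfolding stab_def by blast

lemmas wsimps = we_def wd_def gd_def mid_def kz_def ko_def


lemma case4_1:
  "gen_grp (stab (Sgrp 4 sigma5) (mirror (Hmat 4 sigma5) (wm 4 [La])) \<union> stab (Sgrp 4 sigma5) (mirror (Hmat 4 sigma5) (wm 4 [La, Lj, La, LJ, Lj, Lj, La, LJ, LJ, Lj, LA, LJ, La, Lj, La, LJ, Lj, Lj, La, LJ, LJ, Lj, LA, LJ, La, Lj, La, LJ, Lj, Lj, La, LJ, LJ, Lj, LA, LJ, La, Lj, La, LJ, Lj, Lj, La, LJ, LJ, Lj, LA, LJ, La, Lj, La, LJ, Lj, Lj, La, LJ, LJ, Lj, LA, LJ]))) = Sgrp 4 sigma5"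
proof (rule gen_stab_eq)
  show "(4::nat) = 2 \<or> (4::nat) = 4" by simp
  show "stab (Sgrp 4 sigma5) (mirror (Hmat 4 sigma5) (wm 4 [La])) \<union> stab (Sgrp 4 sigma5) (mirror (Hmat 4 sigma5) (wm 4 [La, Lj, La, LJ, Lj, Lj, La, LJ, LJ, Lj, LA, LJ, La, Lj, La, LJ, Lj, Lj, La, LJ, LJ, Lj, LA, LJ, La, Lj, La, LJ, Lj, Lj, La, LJ, LJ, Lj, LA, LJ, La, Lj, La, LJ, Lj, Lj, La, LJ, LJ, Lj, LA, LJ, La, Lj, La, LJ, Lj, Lj, La, LJ, LJ, Lj, LA, LJ])) \<subseteq> Sgrp 4 sigma5"
    by (rule stabs_sub)
  have c_GG: "wm 4 [LJ, LA, LJ, LA, Lj, La, Lj, LA, LJ, LA, LJ, LA, Lj, La, Lj, LA, LJ, LA, LJ] ** wm 4 [La] = wm 4 [La] ** wm 4 [LJ, LA, LJ, LA, Lj, La, Lj, LA, LJ, LA, LJ, LA, Lj, La, Lj, LA, LJ, LA, LJ]"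
    by (rule comm_check) (simp_all add: wsimps)
  have c_XX: "wm 4 [Lj, La, Lj, LA, LJ, LA, LJ] ** wm 4 [La, Lj, La, LJ, Lj, Lj, La, LJ, LJ, Lj, LA, LJ, La, Lj, La, LJ, Lj, Lj, La, LJ, LJ, Lj, LA, LJ, La, Lj, La, LJ, Lj, Lj, La, LJ, LJ, Lj, LA, LJ, La, Lj, La, LJ, Lj, Lj, La, LJ, LJ, Lj, LA, LJ, La, Lj, La, LJ, Lj, Lj, La, LJ, LJ, Lj, LA, LJ] = wm 4 [La, Lj, La, LJ, Lj, Lj, La, LJ, LJ, Lj, LA, LJ, La, Lj, La, LJ, Lj, Lj, La, LJ, LJ, Lj, LA, LJ, La, Lj, La, LJ, Lj, Lj, La, LJ, LJ, Lj, LA, LJ, La, Lj, La, LJ, Lj, Lj, La, LJ, LJ, Lj, LA, LJ, La, Lj, La, LJ, Lj, Lj, La, LJ, LJ, Lj, LA, LJ] ** wm 4 [Lj, La, Lj, LA, LJ, LA, LJ]"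
    by (rule comm_check) (simp_all add: wsimps)
  have c_a: "wm 4 [La] ** wm 4 [La] = wm 4 [La] ** wm 4 [La]"
    by (rule comm_check) (simp_all add: wsimps)
  have c_x: "wm 4 [Lj, La, Lj, La, LJ, LA, LJ] ** wm 4 [La, Lj, La, LJ, Lj, Lj, La, LJ, LJ, Lj, LA, LJ, La, Lj, La, LJ, Lj, Lj, La, LJ, LJ, Lj, LA, LJ, La, Lj, La, LJ, Lj, Lj, La, LJ, LJ, Lj, LA, LJ, La, Lj, La, LJ, Lj, Lj, La, LJ, LJ, Lj, LA, LJ, La, Lj, La, LJ, Lj, Lj, La, LJ, LJ, Lj, LA, LJ] = wm 4 [La, Lj, La, LJ, Lj, Lj, La, LJ, LJ, Lj, LA, LJ, La, Lj, La, LJ, Lj, Lj, La, LJ, LJ, Lj, LA, LJ, La, Lj, La, LJ, Lj, Lj, La, LJ, LJ, Lj, LA, LJ, La, Lj, La, LJ, Lj, Lj, La, LJ, LJ, Lj, LA, LJ, La, Lj, La, LJ, Lj, Lj, La, LJ, LJ, Lj, LA, LJ] ** wm 4 [Lj, La, Lj, La, LJ, LA, LJ]"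
    by (rule comm_check) (simp_all add: wsimps)
  have c_y: "wm 4 [Lj, La, LJ, La, Lj, La, LJ] ** wm 4 [La] = wm 4 [La] ** wm 4 [Lj, La, LJ, La, Lj, La, LJ]"
    by (rule comm_check) (simp_all add: wsimps)
  have facs: "\<forall>f\<in>set [[Lj, La, Lj, LA, LJ, LA, LJ], [LJ, LA, LJ, LA, Lj, La, Lj, LA, LJ, LA, LJ, LA, Lj, La, Lj, LA, LJ, LA, LJ], [Lj, La, Lj, La, LJ, LA, LJ], [La], [Lj, La, Lj, La, LJ, LA, LJ], [Lj, La, LJ, La, Lj, La, LJ]]. wm 4 f ** wm 4 [La] = wm 4 [La] ** wm 4 f \<or> wm 4 f ** wm 4 [La, Lj, La, LJ, Lj, Lj, La, LJ, LJ, Lj, LA, LJ, La, Lj, La, LJ, Lj, Lj, La, LJ, LJ, Lj, LA, LJ, La, Lj, La, LJ, Lj, Lj, La, LJ, LJ, Lj, LA, LJ, La, Lj, La, LJ, Lj, Lj, La, LJ, LJ, Lj, LA, LJ, La, Lj, La, LJ, Lj, Lj, La, LJ, LJ, Lj, LA, LJ] = wm 4 [La, Lj, La, LJ, Lj, Lj, La, LJ, LJ, Lj, LA, LJ, La, Lj, La, LJ, Lj, Lj, La, LJ, LJ, Lj, LA, LJ, La, Lj, La, LJ, Lj, Lj, La, LJ, LJ, Lj, LA, LJ, La, Lj, La, LJ, Lj, Lj, La, LJ, LJ, Lj, LA, LJ, La, Lj, La, LJ, Lj, Lj, La, LJ, LJ, Lj, LA, LJ] ** wm 4 f"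
    using c_GG c_XX c_a c_x c_y by simp
  have G: "wm 4 (concat [[Lj, La, Lj, LA, LJ, LA, LJ], [LJ, LA, LJ, LA, Lj, La, Lj, LA, LJ, LA, LJ, LA, Lj, La, Lj, LA, LJ, LA, LJ], [Lj, La, Lj, La, LJ, LA, LJ], [La], [Lj, La, Lj, La, LJ, LA, LJ], [Lj, La, LJ, La, Lj, La, LJ]]) \<in> gen_grp (stab (Sgrp 4 sigma5) (mirror (Hmat 4 sigma5) (wm 4 [La])) \<union> stab (Sgrp 4 sigma5) (mirror (Hmat 4 sigma5) (wm 4 [La, Lj, La, LJ, Lj, Lj, La, LJ, LJ, Lj, LA, LJ, La, Lj, La, LJ, Lj, Lj, La, LJ, LJ, Lj, LA, LJ, La, Lj, La, LJ, Lj, Lj, La, LJ, LJ, Lj, LA, LJ, La, Lj, La, LJ, Lj, Lj, La, LJ, LJ, Lj, LA, LJ, La, Lj, La, LJ, Lj, Lj, La, LJ, LJ, Lj, LA, LJ])))"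
    by (rule concat_gen[OF _ facs]) simp
  have f1: "[La] \<in> set [[Lj, La, Lj, LA, LJ, LA, LJ], [LJ, LA, LJ, LA, Lj, La, Lj, LA, LJ, LA, LJ, LA, Lj, La, Lj, LA, LJ, LA, LJ], [Lj, La, Lj, La, LJ, LA, LJ], [La], [Lj, La, Lj, La, LJ, LA, LJ], [Lj, La, LJ, La, Lj, La, LJ]]" by simp
  have "wm 4 [La] \<in> gen_grp (stab (Sgrp 4 sigma5) (mirror (Hmat 4 sigma5) (wm 4 [La])) \<union> stab (Sgrp 4 sigma5) (mirror (Hmat 4 sigma5) (wm 4 [La, Lj, La, LJ, Lj, Lj, La, LJ, LJ, Lj, LA, LJ, La, Lj, La, LJ, Lj, Lj, La, LJ, LJ, Lj, LA, LJ, La, Lj, La, LJ, Lj, Lj, La, LJ, LJ, Lj, LA, LJ, La, Lj, La, LJ, Lj, Lj, La, LJ, LJ, Lj, LA, LJ, La, Lj, La, LJ, Lj, Lj, La, LJ, LJ, Lj, LA, LJ])))"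
    using concat_gen[of 4 "[[La]]" "wm 4 [La]" "wm 4 [La, Lj, La, LJ, Lj, Lj, La, LJ, LJ, Lj, LA, LJ, La, Lj, La, LJ, Lj, Lj, La, LJ, LJ, Lj, LA, LJ, La, Lj, La, LJ, Lj, Lj, La, LJ, LJ, Lj, LA, LJ, La, Lj, La, LJ, Lj, Lj, La, LJ, LJ, Lj, LA, LJ, La, Lj, La, LJ, Lj, Lj, La, LJ, LJ, Lj, LA, LJ]"] by simp
  then show "R1m 4 sigma5 \<in> gen_grp (stab (Sgrp 4 sigma5) (mirror (Hmat 4 sigma5) (wm 4 [La])) \<union> stab (Sgrp 4 sigma5) (mirror (Hmat 4 sigma5) (wm 4 [La, Lj, La, LJ, Lj, Lj, La, LJ, LJ, Lj, LA, LJ, La, Lj, La, LJ, Lj, Lj, La, LJ, LJ, Lj, LA, LJ, La, Lj, La, LJ, Lj, Lj, La, LJ, LJ, Lj, LA, LJ, La, Lj, La, LJ, Lj, Lj, La, LJ, LJ, Lj, LA, LJ, La, Lj, La, LJ, Lj, Lj, La, LJ, LJ, Lj, LA, LJ])))"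
    by (simp add: R1_w[of 4])
  have "wm 4 [Lj] = wm 4 (concat [[Lj, La, Lj, LA, LJ, LA, LJ], [LJ, LA, LJ, LA, Lj, La, Lj, LA, LJ, LA, LJ, LA, Lj, La, Lj, LA, LJ, LA, LJ], [Lj, La, Lj, La, LJ, LA, LJ], [La], [Lj, La, Lj, La, LJ, LA, LJ], [Lj, La, LJ, La, Lj, La, LJ]] @ [Lj, Lj, Lj])"
    by (rule wm_ident) (simp_all add: wsimps)
  also have "\<dots> = wm 4 (concat [[Lj, La, Lj, LA, LJ, LA, LJ], [LJ, LA, LJ, LA, Lj, La, Lj, LA, LJ, LA, LJ, LA, Lj, La, Lj, LA, LJ, LA, LJ], [Lj, La, Lj, La, LJ, LA, LJ], [La], [Lj, La, Lj, La, LJ, LA, LJ], [Lj, La, LJ, La, Lj, La, LJ]])"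
    using J3 by (simp add: wm_append wm_def matrix_mul_assoc)
  finally show "Jm \<in> gen_grp (stab (Sgrp 4 sigma5) (mirror (Hmat 4 sigma5) (wm 4 [La])) \<union> stab (Sgrp 4 sigma5) (mirror (Hmat 4 sigma5) (wm 4 [La, Lj, La, LJ, Lj, Lj, La, LJ, LJ, Lj, LA, LJ, La, Lj, La, LJ, Lj, Lj, La, LJ, LJ, Lj, LA, LJ, La, Lj, La, LJ, Lj, Lj, La, LJ, LJ, Lj, LA, LJ, La, Lj, La, LJ, Lj, Lj, La, LJ, LJ, Lj, LA, LJ, La, Lj, La, LJ, Lj, Lj, La, LJ, LJ, Lj, LA, LJ])))"
    using G by (simp add: J_w[of 4])
qed


lemma case4_2:
  "gen_grp (stab (Sgrp 4 sigma5) (mirror (Hmat 4 sigma5) (wm 4 [La])) \<union> stab (Sgrp 4 sigma5) (mirror (Hmat 4 sigma5) (wm 4 [La, Lj, Lj, LA, LJ, LJ, Lj, La, LJ, Lj, Lj, La, LJ, LJ, La, Lj, Lj, LA, LJ, LJ, Lj, La, LJ, Lj, Lj, La, LJ, LJ, La, Lj, Lj, LA, LJ, LJ, Lj, La, LJ, Lj, Lj, La, LJ, LJ, La, Lj, Lj, LA, LJ, LJ, Lj, La, LJ, Lj, Lj, La, LJ, LJ, La, Lj, Lj, LA, LJ, LJ, Lj, La, LJ, Lj, Lj, La, LJ, LJ]))) = Sgrp 4 sigma5"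
proof (rule gen_stab_eq)
  show "(4::nat) = 2 \<or> (4::nat) = 4" by simp
  show "stab (Sgrp 4 sigma5) (mirror (Hmat 4 sigma5) (wm 4 [La])) \<union> stab (Sgrp 4 sigma5) (mirror (Hmat 4 sigma5) (wm 4 [La, Lj, Lj, LA, LJ, LJ, Lj, La, LJ, Lj, Lj, La, LJ, LJ, La, Lj, Lj, LA, LJ, LJ, Lj, La, LJ, Lj, Lj, La, LJ, LJ, La, Lj, Lj, LA, LJ, LJ, Lj, La, LJ, Lj, Lj, La, LJ, LJ, La, Lj, Lj, LA, LJ, LJ, Lj, La, LJ, Lj, Lj, La, LJ, LJ, La, Lj, Lj, LA, LJ, LJ, Lj, La, LJ, Lj, Lj, La, LJ, LJ])) \<subseteq> Sgrp 4 sigma5"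
    by (rule stabs_sub)
  have c_GG: "wm 4 [LJ, LA, LJ, LA, Lj, La, Lj, LA, LJ, LA, LJ, LA, Lj, La, Lj, LA, LJ, LA, LJ] ** wm 4 [La] = wm 4 [La] ** wm 4 [LJ, LA, LJ, LA, Lj, La, Lj, LA, LJ, LA, LJ, LA, Lj, La, Lj, LA, LJ, LA, LJ]"
    by (rule comm_check) (simp_all add: wsimps)
  have c_XX: "wm 4 [LJ, LA, LJ, LA, Lj, La, Lj] ** wm 4 [La, Lj, Lj, LA, LJ, LJ, Lj, La, LJ, Lj, Lj, La, LJ, LJ, La, Lj, Lj, LA, LJ, LJ, Lj, La, LJ, Lj, Lj, La, LJ, LJ, La, Lj, Lj, LA, LJ, LJ, Lj, La, LJ, Lj, Lj, La, LJ, LJ, La, Lj, Lj, LA, LJ, LJ, Lj, La, LJ, Lj, Lj, La, LJ, LJ, La, Lj, Lj, LA, LJ, LJ, Lj, La, LJ, Lj, Lj, La, LJ, LJ] = wm 4 [La, Lj, Lj, LA, LJ, LJ, Lj, La, LJ, Lj, Lj, La, LJ, LJ, La, Lj, Lj, LA, LJ, LJ, Lj, La, LJ, Lj, Lj, La, LJ, LJ, La, Lj, Lj, LA, LJ, LJ, Lj, La, LJ, Lj, Lj, La, LJ, LJ, La, Lj, Lj, LA, LJ, LJ, Lj, La, LJ, Lj, Lj, La, LJ, LJ, La, Lj, Lj, LA, LJ, LJ, Lj, La, LJ, Lj, Lj, La, LJ, LJ] ** wm 4 [LJ, LA, LJ, LA, Lj, La, Lj]"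
    by (rule comm_check) (simp_all add: wsimps)
  have c_a: "wm 4 [La] ** wm 4 [La] = wm 4 [La] ** wm 4 [La]"
    by (rule comm_check) (simp_all add: wsimps)
  have c_x: "wm 4 [LJ, LA, LJ, La, Lj, La, Lj] ** wm 4 [La, Lj, Lj, LA, LJ, LJ, Lj, La, LJ, Lj, Lj, La, LJ, LJ, La, Lj, Lj, LA, LJ, LJ, Lj, La, LJ, Lj, Lj, La, LJ, LJ, La, Lj, Lj, LA, LJ, LJ, Lj, La, LJ, Lj, Lj, La, LJ, LJ, La, Lj, Lj, LA, LJ, LJ, Lj, La, LJ, Lj, Lj, La, LJ, LJ, La, Lj, Lj, LA, LJ, LJ, Lj, La, LJ, Lj, Lj, La, LJ, LJ] = wm 4 [La, Lj, Lj, LA, LJ, LJ, Lj, La, LJ, Lj, Lj, La, LJ, LJ, La, Lj, Lj, LA, LJ, LJ, Lj, La, LJ, Lj, Lj, La, LJ, LJ, La, Lj, Lj, LA, LJ, LJ, Lj, La, LJ, Lj, Lj, La, LJ, LJ, La, Lj, Lj, LA, LJ, LJ, Lj, La, LJ, Lj, Lj, La, LJ, LJ, La, Lj, Lj, LA, LJ, LJ, Lj, La, LJ, Lj, Lj, La, LJ, LJ] ** wm 4 [LJ, LA, LJ, La, Lj, La, Lj]"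
    by (rule comm_check) (simp_all add: wsimps)
  have c_z: "wm 4 [LJ, La, Lj, La, LJ, La, Lj] ** wm 4 [La] = wm 4 [La] ** wm 4 [LJ, La, Lj, La, LJ, La, Lj]"
    by (rule comm_check) (simp_all add: wsimps)
  have facs: "\<forall>f\<in>set [[LJ, La, Lj, La, LJ, La, Lj], [LJ, LA, LJ, La, Lj, La, Lj], [La], [LJ, LA, LJ, La, Lj, La, Lj], [LJ, LA, LJ, LA, Lj, La, Lj, LA, LJ, LA, LJ, LA, Lj, La, Lj, LA, LJ, LA, LJ], [LJ, LA, LJ, LA, Lj, La, Lj]]. wm 4 f ** wm 4 [La] = wm 4 [La] ** wm 4 f \<or> wm 4 f ** wm 4 [La, Lj, Lj, LA, LJ, LJ, Lj, La, LJ, Lj, Lj, La, LJ, LJ, La, Lj, Lj, LA, LJ, LJ, Lj, La, LJ, Lj, Lj, La, LJ, LJ, La, Lj, Lj, LA, LJ, LJ, Lj, La, LJ, Lj, Lj, La, LJ, LJ, La, Lj, Lj, LA, LJ, LJ, Lj, La, LJ, Lj, Lj, La, LJ, LJ, La, Lj, Lj, LA, LJ, LJ, Lj, La, LJ, Lj, Lj, La, LJ, LJ] = wm 4 [La, Lj, Lj, LA, LJ, LJ, Lj, La, LJ, Lj, Lj, La, LJ, LJ, La, Lj, Lj, LA, LJ, LJ, Lj, La, LJ, Lj, Lj, La, LJ, LJ, La, Lj, Lj, LA, LJ, LJ, Lj, La, LJ, Lj, Lj, La, LJ, LJ, La, Lj, Lj, LA, LJ, LJ, Lj, La, LJ, Lj,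 Lj, La, LJ, LJ, La, Lj, Lj, LA, LJ, LJ, Lj, La, LJ, Lj, Lj, La, LJ, LJ] ** wm 4 f"
    using c_GG c_XX c_a c_x c_z by simp
  have G: "wm 4 (concat [[LJ, La, Lj, La, LJ, La, Lj], [LJ, LA, LJ, La, Lj, La, Lj], [La], [LJ, LA, LJ, La, Lj, La, Lj], [LJ, LA, LJ, LA, Lj, La, Lj, LA, LJ, LA, LJ, LA, Lj, La, Lj, LA, LJ, LA, LJ], [LJ, LA, LJ, LA, Lj, La, Lj]]) \<in> gen_grp (stab (Sgrp 4 sigma5) (mirror (Hmat 4 sigma5) (wm 4 [La])) \<union> stab (Sgrp 4 sigma5) (mirror (Hmat 4 sigma5) (wm 4 [La, Lj, Lj, LA, LJ, LJ, Lj, La, LJ, Lj, Lj, La, LJ, LJ, La, Lj, Lj, LA, LJ, LJ, Lj, La, LJ, Lj, Lj, La, LJ, LJ, La, Lj, Lj, LA, LJ, LJ, Lj, La, LJ, Lj, Lj, La, LJ, LJ, La, Lj, Lj, LA, LJ, LJ, Lj, La, LJ, Lj, Lj, La, LJ, LJ, La, Lj, Lj, LA, LJ, LJ, Lj, La, LJ, Lj, Lj, La, LJ, LJ])))"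
    by (rule concat_gen[OF _ facs]) simp
  have f1: "[La] \<in> set [[LJ, La, Lj, La, LJ, La, Lj], [LJ, LA, LJ, La, Lj, La, Lj], [La], [LJ, LA, LJ, La, Lj, La, Lj], [LJ, LA, LJ, LA, Lj, La, Lj, LA, LJ, LA, LJ, LA, Lj, La, Lj, LA, LJ, LA, LJ], [LJ, LA, LJ, LA, Lj, La, Lj]]" by simp
  have "wm 4 [La] \<in> gen_grp (stab (Sgrp 4 sigma5) (mirror (Hmat 4 sigma5) (wm 4 [La])) \<union> stab (Sgrp 4 sigma5) (mirror (Hmat 4 sigma5) (wm 4 [La, Lj, Lj, LA, LJ, LJ, Lj, La, LJ, Lj, Lj, La, LJ, LJ, La, Lj, Lj, LA, LJ, LJ, Lj, La, LJ, Lj, Lj, La, LJ, LJ, La, Lj, Lj, LA, LJ, LJ, Lj, La, LJ, Lj, Lj, La, LJ, LJ, La, Lj, Lj, LA, LJ, LJ, Lj, La, LJ, Lj, Lj, La, LJ, LJ, La, Lj, Lj, LA, LJ, LJ, Lj, La, LJ, Lj, Lj, La, LJ, LJ])))"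
    using concat_gen[of 4 "[[La]]" "wm 4 [La]" "wm 4 [La, Lj, Lj, LA, LJ, LJ, Lj, La, LJ, Lj, Lj, La, LJ, LJ, La, Lj, Lj, LA, LJ, LJ, Lj, La, LJ, Lj, Lj, La, LJ, LJ, La, Lj, Lj, LA, LJ, LJ, Lj, La, LJ, Lj, Lj, La, LJ, LJ, La, Lj, Lj, LA, LJ, LJ, Lj, La, LJ, Lj, Lj, La, LJ, LJ, La, Lj, Lj, LA, LJ, LJ, Lj, La, LJ, Lj, Lj, La, LJ, LJ]"] by simp
  then show "R1m 4 sigma5 \<in> gen_grp (stab (Sgrp 4 sigma5) (mirror (Hmat 4 sigma5) (wm 4 [La])) \<union> stab (Sgrp 4 sigma5) (mirror (Hmat 4 sigma5) (wm 4 [La, Lj, Lj, LA, LJ, LJ, Lj, La, LJ, Lj, Lj, La, LJ, LJ, La, Lj, Lj, LA, LJ, LJ, Lj, La, LJ, Lj, Lj, La, LJ, LJ, La, Lj, Lj, LA, LJ, LJ, Lj, La, LJ, Lj, Lj, La, LJ, LJ, La, Lj, Lj, LA, LJ, LJ, Lj, La, LJ, Lj, Lj, La, LJ, LJ, La, Lj, Lj, LA, LJ, LJ, Lj, La, LJ, Lj, Lj, La, LJ, LJ])))"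
    by (simp add: R1_w[of 4])
  have "wm 4 [Lj] = wm 4 (concat [[LJ, La, Lj, La, LJ, La, Lj], [LJ, LA, LJ, La, Lj, La, Lj], [La], [LJ, LA, LJ, La, Lj, La, Lj], [LJ, LA, LJ, LA, Lj, La, Lj, LA, LJ, LA, LJ, LA, Lj, La, Lj, LA, LJ, LA, LJ], [LJ, LA, LJ, LA, Lj, La, Lj]] @ [Lj, Lj, Lj])"
    by (rule wm_ident) (simp_all add: wsimps)
  also have "\<dots> = wm 4 (concat [[LJ, La, Lj, La, LJ, La, Lj], [LJ, LA, LJ, La, Lj, La, Lj], [La], [LJ, LA, LJ, La, Lj, La, Lj], [LJ, LA, LJ, LA, Lj, La, Lj, LA, LJ, LA, LJ, LA, Lj, La, Lj, LA, LJ, LA, LJ], [LJ, LA, LJ, LA, Lj, La, Lj]])"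
    using J3 by (simp add: wm_append wm_def matrix_mul_assoc)
  finally show "Jm \<in> gen_grp (stab (Sgrp 4 sigma5) (mirror (Hmat 4 sigma5) (wm 4 [La])) \<union> stab (Sgrp 4 sigma5) (mirror (Hmat 4 sigma5) (wm 4 [La, Lj, Lj, LA, LJ, LJ, Lj, La, LJ, Lj, Lj, La, LJ, LJ, La, Lj, Lj, LA, LJ, LJ, Lj, La, LJ, Lj, Lj, La, LJ, LJ, La, Lj, Lj, LA, LJ, LJ, Lj, La, LJ, Lj, Lj, La, LJ, LJ, La, Lj, Lj, LA, LJ, LJ, Lj, La, LJ, Lj, Lj, La, LJ, LJ, La, Lj, Lj, LA, LJ, LJ, Lj, La, LJ, Lj, Lj, La, LJ, LJ])))"
    using G by (simp add: J_w[of 4])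
qed


lemma case4_3:
  "gen_grp (stab (Sgrp 4 sigma5) (mirror (Hmat 4 sigma5) (wm 4 [La])) \<union> stab (Sgrp 4 sigma5) (mirror (Hmat 4 sigma5) (wm 4 [La, Lj, LA, LJ, LA, Lj, Lj, La, LJ, LJ, La, Lj, La, LJ, La, Lj, LA, LJ, LA, Lj, Lj, La, LJ, LJ, La, Lj, La, LJ, La, Lj, LA, LJ, LA, Lj, Lj, La, LJ, LJ, La, Lj, La, LJ, La, Lj, LA, LJ, LA, Lj, Lj, La, LJ, LJ, La, Lj, La, LJ, La, Lj, LA, LJ, LA, Lj, Lj, La, LJ, LJ, La, Lj, La, LJ]))) = Sgrp 4 sigma5"
proof (rule gen_stab_eq)
  show "(4::nat) = 2 \<or> (4::nat) = 4" by simp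
  show "stab (Sgrp 4 sigma5) (mirror (Hmat 4 sigma5) (wm 4 [La])) \<union> stab (Sgrp 4 sigma5) (mirror (Hmat 4 sigma5) (wm 4 [La, Lj, LA, LJ, LA, Lj, Lj, La, LJ, LJ, La, Lj, La, LJ, La, Lj, LA, LJ, LA, Lj, Lj, La, LJ, LJ, La, Lj, La, LJ, La, Lj, LA, LJ, LA, Lj, Lj, La, LJ, LJ, La, Lj, La, LJ, La, Lj, LA, LJ, LA, Lj, Lj, La, LJ, LJ, La, Lj, La, LJ, La, Lj, LA, LJ, LA, Lj, Lj, La, LJ, LJ, La, Lj, La, LJ])) \<subseteq> Sgrp 4 sigma5"
    by (rule stabs_sub)
  have c_GG: "wm 4 [LJ, LA, LJ, LA, Lj, La, Lj, LA, LJ, LA, LJ, LA, Lj, La, Lj, LA, LJ, LA, LJ] ** wm 4 [La] = wm 4 [La] ** wm 4 [LJ, LA, LJ, LA, Lj, La, Lj, LA, LJ, LA, LJ, LA, Lj, La, Lj, LA, LJ, LA, LJ]"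
    by (rule comm_check) (simp_all add: wsimps)
  have c_XX: "wm 4 [Lj, LA, LJ, LA, LJ, LA, Lj, La, Lj, La, LJ] ** wm 4 [La, Lj, LA, LJ, LA, Lj, Lj, La, LJ, LJ, La, Lj, La, LJ, La, Lj, LA, LJ, LA, Lj, Lj, La, LJ, LJ, La, Lj, La, LJ, La, Lj, LA, LJ, LA, Lj, Lj, La, LJ, LJ, La, Lj, La, LJ, La, Lj, LA, LJ, LA, Lj, Lj, La, LJ, LJ, La, Lj, La, LJ, La, Lj, LA, LJ, LA, Lj, Lj, La, LJ, LJ, La, Lj, La, LJ] = wm 4 [La, Lj, LA, LJ, LA, Lj, Lj, La, LJ, LJ, La, Lj, La, LJ, La, Lj, LA, LJ, LA, Lj, Lj, La, LJ, LJ, La, Lj, La, LJ, La, Lj, LA, LJ, LA, Lj, Lj, La, LJ, LJ, La, Lj, La, LJ, La, Lj, LA, LJ, LA, Lj, Lj, La, LJ, LJ, La, Lj, La, LJ, La, Lj, LA, LJ, LA, Lj, Lj, La, LJ, LJ, La, Lj, La, LJ] ** wm 4 [Lj, LA, LJ, LA, LJ, LA, Lj, La, Lj, La, LJ]"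
    by (rule comm_check) (simp_all add: wsimps)
  have c_YY: "wm 4 [Lj, LA, LJ, LA, Lj, LA, LJ] ** wm 4 [La] = wm 4 [La] ** wm 4 [Lj, LA, LJ, LA, Lj, LA, LJ]"
    by (rule comm_check) (simp_all add: wsimps)
  have c_a: "wm 4 [La] ** wm 4 [La] = wm 4 [La] ** wm 4 [La]"
    by (rule comm_check) (simp_all add: wsimps)
  have c_x: "wm 4 [Lj, LA, LJ, LA, LJ, La, Lj, La, Lj, La, LJ] ** wm 4 [La, Lj, LA, LJ, LA, Lj, Lj, La, LJ, LJ, La, Lj, La, LJ, La, Lj, LA, LJ, LA, Lj, Lj, La, LJ, LJ, La, Lj, La, LJ, La, Lj, LA, LJ, LA, Lj, Lj, La, LJ, LJ, La, Lj, La, LJ, La, Lj, LA, LJ, LA, Lj, Lj, La, LJ, LJ, La, Lj, La, LJ, La, Lj, LA, LJ, LA, Lj, Lj, La, LJ, LJ, La, Lj, La, LJ] = wm 4 [La, Lj, LA, LJ, LA, Lj, Lj, La, LJ, LJ, La, Lj, La, LJ, La, Lj, LA, LJ, LA, Lj, Lj, La, LJ, LJ, La, Lj, La, LJ, La, Lj, LA, LJ, LA, Lj, Lj, La, LJ, LJ, La, Lj, La, LJ, La, Lj, LA, LJ, LA, Lj, Lj, La, LJ, LJ, La, Lj, La, LJ, La, Lj, LA, LJ, LA, Lj, Lj, La, LJ, LJ, La, Lj, La, LJ] ** wm 4 [Lj, LA, LJ, LA, LJ, La, Lj, La, Lj, La, LJ]"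
    by (rule comm_check) (simp_all add: wsimps)
  have c_y: "wm 4 [Lj, La, LJ, La, Lj, La, LJ] ** wm 4 [La] = wm 4 [La] ** wm 4 [Lj, La, LJ, La, Lj, La, LJ]"
    by (rule comm_check) (simp_all add: wsimps)
  have facs: "\<forall>f\<in>set [[Lj, La, LJ, La, Lj, La, LJ], [Lj, LA, LJ, LA, LJ, LA, Lj, La, Lj, La, LJ], [Lj, LA, LJ, LA, Lj, LA, LJ], [LJ, LA, LJ, LA, Lj, La, Lj, LA, LJ, LA, LJ, LA, Lj, La, Lj, LA, LJ, LA, LJ], [Lj, La, LJ, La, Lj, La, LJ], [Lj, LA, LJ, LA, LJ, La, Lj, La, Lj, La, LJ], [La], [Lj, LA, LJ, LA, LJ, La, Lj, La, Lj, La, LJ]]. wm 4 f ** wm 4 [La] = wm 4 [La] ** wm 4 f \<or> wm 4 f ** wm 4 [La, Lj, LA, LJ, LA, Lj, Lj, La, LJ, LJ, La, Lj, La, LJ, La, Lj, LA, LJ, LA, Lj, Lj, La, LJ, LJ, La, Lj, La, LJ, La, Lj, LA, LJ, LA, Lj, Lj, La, LJ, LJ, La, Lj, La, LJ, La, Lj, LA, LJ, LA, Lj, Lj, La, LJ, LJ, La, Lj, La, LJ, La, Lj, LA, LJ, LA, Lj, Lj, La, LJ, LJ, La, Lj, La, LJ] = wm 4 [La, Lj, LA, LJ, LA, Lj, Lj, La, LJ, LJ, La, Lj, La, LJ, La, Lj, LA, LJ, LA, Lj, Lj, La, LJ, LJ, La, Lj, La, LJ, La, Lj, LA, LJ, LA,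 Lj, Lj, La, LJ, LJ, La, Lj, La, LJ, La, Lj, LA, LJ, LA, Lj, Lj, La, LJ, LJ, La, Lj, La, LJ, La, Lj, LA, LJ, LA, Lj, Lj, La, LJ, LJ, La, Lj, La, LJ] ** wm 4 f"
    using c_GG c_XX c_YY c_a c_x c_y by simp
  have G: "wm 4 (concat [[Lj, La, LJ, La, Lj, La, LJ], [Lj, LA, LJ, LA, LJ, LA, Lj, La, Lj, La, LJ], [Lj, LA, LJ, LA, Lj, LA, LJ], [LJ, LA, LJ, LA, Lj, La, Lj, LA, LJ, LA, LJ, LA, Lj, La, Lj, LA, LJ, LA, LJ], [Lj, La, LJ, La, Lj, La, LJ], [Lj, LA, LJ, LA, LJ, La, Lj, La, Lj, La, LJ], [La], [Lj, LA, LJ, LA, LJ, La, Lj, La, Lj, La, LJ]]) \<in> gen_grp (stab (Sgrp 4 sigma5) (mirror (Hmat 4 sigma5) (wm 4 [La])) \<union> stab (Sgrp 4 sigma5) (mirror (Hmat 4 sigma5) (wm 4 [La, Lj, LA, LJ, LA, Lj, Lj, La, LJ, LJ, La, Lj, La, LJ, La, Lj, LA, LJ, LA, Lj, Lj, La, LJ, LJ, La, Lj, La, LJ, La, Lj, LA, LJ, LA, Lj, Lj, La, LJ, LJ, La, Lj, La, LJ, La, Lj, LA, LJ, LA, Lj, Lj, La, LJ, LJ, La, Lj, La, LJ, La, Lj, LA, LJ, LA, Lj, Lj, La, LJ, LJ, La, Lj, La, LJ])))"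
    by (rule concat_gen[OF _ facs]) simp
  have f1: "[La] \<in> set [[Lj, La, LJ, La, Lj, La, LJ], [Lj, LA, LJ, LA, LJ, LA, Lj, La, Lj, La, LJ], [Lj, LA, LJ, LA, Lj, LA, LJ], [LJ, LA, LJ, LA, Lj, La, Lj, LA, LJ, LA, LJ, LA, Lj, La, Lj, LA, LJ, LA, LJ], [Lj, La, LJ, La, Lj, La, LJ], [Lj, LA, LJ, LA, LJ, La, Lj, La, Lj, La, LJ], [La], [Lj, LA, LJ, LA, LJ, La, Lj, La, Lj, La, LJ]]" by simp
  have "wm 4 [La] \<in> gen_grp (stab (Sgrp 4 sigma5) (mirror (Hmat 4 sigma5) (wm 4 [La])) \<union> stab (Sgrp 4 sigma5) (mirror (Hmat 4 sigma5) (wm 4 [La, Lj, LA, LJ, LA, Lj, Lj, La, LJ, LJ, La, Lj, La, LJ, La, Lj, LA, LJ, LA, Lj, Lj, La, LJ, LJ, La, Lj, La, LJ, La, Lj, LA, LJ, LA, Lj, Lj, La, LJ, LJ, La, Lj, La, LJ, La, Lj, LA, LJ, LA, Lj, Lj, La, LJ, LJ, La, Lj, La, LJ, La, Lj, LA, LJ, LA, Lj, Lj, La, LJ, LJ, La, Lj, La, LJ])))"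
    using concat_gen[of 4 "[[La]]" "wm 4 [La]" "wm 4 [La, Lj, LA, LJ, LA, Lj, Lj, La, LJ, LJ, La, Lj, La, LJ, La, Lj, LA, LJ, LA, Lj, Lj, La, LJ, LJ, La, Lj, La, LJ, La, Lj, LA, LJ, LA, Lj, Lj, La, LJ, LJ, La, Lj, La, LJ, La, Lj, LA, LJ, LA, Lj, Lj, La, LJ, LJ, La, Lj, La, LJ, La, Lj, LA, LJ, LA, Lj, Lj, La, LJ, LJ, La, Lj, La, LJ]"] by simp
  then show "R1m 4 sigma5 \<in> gen_grp (stab (Sgrp 4 sigma5) (mirror (Hmat 4 sigma5) (wm 4 [La])) \<union> stab (Sgrp 4 sigma5) (mirror (Hmat 4 sigma5) (wm 4 [La, Lj, LA, LJ, LA, Lj, Lj, La, LJ, LJ, La, Lj, La, LJ, La, Lj, LA, LJ, LA, Lj, Lj, La, LJ, LJ, La, Lj, La, LJ, La, Lj, LA, LJ, LA, Lj, Lj, La, LJ, LJ, La, Lj, La, LJ, La, Lj, LA, LJ, LA, Lj, Lj, La, LJ, LJ, La, Lj, La, LJ, La, Lj, LA, LJ, LA, Lj, Lj, La, LJ, LJ, La, Lj, La, LJ])))"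
    by (simp add: R1_w[of 4])
  have "wm 4 [Lj] = wm 4 (concat [[Lj, La, LJ, La, Lj, La, LJ], [Lj, LA, LJ, LA, LJ, LA, Lj, La, Lj, La, LJ], [Lj, LA, LJ, LA, Lj, LA, LJ], [LJ, LA, LJ, LA, Lj, La, Lj, LA, LJ, LA, LJ, LA, Lj, La, Lj, LA, LJ, LA, LJ], [Lj, La, LJ, La, Lj, La, LJ], [Lj, LA, LJ, LA, LJ, La, Lj, La, Lj, La, LJ], [La], [Lj, LA, LJ, LA, LJ, La, Lj, La, Lj, La, LJ]] @ [Lj, Lj, Lj])"
    by (rule wm_ident) (simp_all add: wsimps)
  also have "\<dots> = wm 4 (concat [[Lj, La, LJ, La, Lj, La, LJ], [Lj, LA, LJ, LA, LJ, LA, Lj, La, Lj, La, LJ], [Lj, LA, LJ, LA, Lj, LA, LJ], [LJ, LA, LJ, LA, Lj, La, Lj, LA, LJ, LA, LJ, LA, Lj, La, Lj, LA, LJ, LA, LJ], [Lj, La, LJ, La, Lj, La, LJ], [Lj, LA, LJ, LA, LJ, La, Lj, La, Lj, La, LJ], [La], [Lj, LA, LJ, LA, LJ, La, Lj, La, Lj, La, LJ]])"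
    using J3 by (simp add: wm_append wm_def matrix_mul_assoc)
  finally show "Jm \<in> gen_grp (stab (Sgrp 4 sigma5) (mirror (Hmat 4 sigma5) (wm 4 [La])) \<union> stab (Sgrp 4 sigma5) (mirror (Hmat 4 sigma5) (wm 4 [La, Lj, LA, LJ, LA, Lj, Lj, La, LJ, LJ, La, Lj, La, LJ, La, Lj, LA, LJ, LA, Lj, Lj, La, LJ, LJ, La, Lj, La, LJ, La, Lj, LA, LJ, LA, Lj, Lj, La, LJ, LJ, La, Lj, La, LJ, La, Lj, LA, LJ, LA, Lj, Lj, La, LJ, LJ, La, Lj, La, LJ, La, Lj, LA, LJ, LA, Lj, Lj, La, LJ, LJ, La, Lj, La, LJ])))"
    using G by (simp add: J_w[of 4])
qed


lemma case4_4:
  "gen_grp (stab (Sgrp 4 sigma5) (mirror (Hmat 4 sigma5) (wm 4 [La])) \<union> stab (Sgrp 4 sigma5) (mirror (Hmat 4 sigma5) (wm 4 [La, Lj, Lj, La, LJ, LJ, La, Lj, La, LJ, LA, Lj, Lj, LA, LJ, LJ, La, Lj, Lj, La, LJ, LJ, La, Lj, La, LJ, LA, Lj, Lj, LA, LJ, LJ, La, Lj, Lj, La, LJ, LJ, La, Lj, La, LJ, LA, Lj, Lj, LA, LJ, LJ, La, Lj, Lj, La, LJ, LJ, La, Lj, La, LJ, LA, Lj, Lj, LA, LJ, LJ, La, Lj, Lj, La, LJ, LJ, La, Lj, La, LJ, LA, Lj, Lj, LA, LJ, LJ]))) = Sgrp 4 sigma5"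
proof (rule gen_stab_eq)
  show "(4::nat) = 2 \<or> (4::nat) = 4" by simp
  show "stab (Sgrp 4 sigma5) (mirror (Hmat 4 sigma5) (wm 4 [La])) \<union> stab (Sgrp 4 sigma5) (mirror (Hmat 4 sigma5) (wm 4 [La, Lj, Lj, La, LJ, LJ, La, Lj, La, LJ, LA, Lj, Lj, LA, LJ, LJ, La, Lj, Lj, La, LJ, LJ, La, Lj, La, LJ, LA, Lj, Lj, LA, LJ, LJ, La, Lj, Lj, La, LJ, LJ, La, Lj, La, LJ, LA, Lj, Lj, LA, LJ, LJ, La, Lj, Lj, La, LJ, LJ, La, Lj, La, LJ, LA, Lj, Lj, LA, LJ, LJ, La, Lj, Lj, La, LJ, LJ, La, Lj, La, LJ, LA, Lj, Lj, LA, LJ, LJ])) \<subseteq> Sgrp 4 sigma5"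
    by (rule stabs_sub)
  have c_GG: "wm 4 [LJ, LA, LJ, LA, Lj, La, Lj, LA, LJ, LA, LJ, LA, Lj, La, Lj, LA, LJ, LA, LJ] ** wm 4 [La] = wm 4 [La] ** wm 4 [LJ, LA, LJ, LA, Lj, La, Lj, LA, LJ, LA, LJ, LA, Lj, La, Lj, LA, LJ, LA, LJ]"
    by (rule comm_check) (simp_all add: wsimps)
  have c_XX: "wm 4 [LJ, La, Lj, La, Lj, LA, LJ, LA, LJ, LA, Lj] ** wm 4 [La, Lj, Lj, La, LJ, LJ, La, Lj, La, LJ, LA, Lj, Lj, LA, LJ, LJ, La, Lj, Lj, La, LJ, LJ, La, Lj, La, LJ, LA, Lj, Lj, LA, LJ, LJ, La, Lj, Lj, La, LJ, LJ, La, Lj, La, LJ, LA, Lj, Lj, LA, LJ, LJ, La, Lj, Lj, La, LJ, LJ, La, Lj, La, LJ, LA, Lj, Lj, LA, LJ, LJ, La, Lj, Lj, La, LJ, LJ, La, Lj, La, LJ, LA, Lj, Lj, LA, LJ, LJ] = wm 4 [La, Lj, Lj, La, LJ, LJ, La, Lj, La, LJ, LA, Lj, Lj, LA, LJ, LJ, La, Lj, Lj, La, LJ, LJ, La, Lj, La, LJ, LA, Lj, Lj, LA, LJ, LJ, La, Lj, Lj, La, LJ, LJ, La, Lj, La, LJ, LA, Lj, Lj, LA, LJ, LJ, La, Lj, Lj, La, LJ, LJ, La, Lj, La, LJ, LA, Lj, Lj, LA, LJ, LJ, La, Lj, Lj, La, LJ, LJ, La, Lj, La, LJ, LA, Lj,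 Lj, LA, LJ, LJ] ** wm 4 [LJ, La, Lj, La, Lj, LA, LJ, LA, LJ, LA, Lj]"
    by (rule comm_check) (simp_all add: wsimps)
  have c_ZZ: "wm 4 [LJ, LA, Lj, LA, LJ, LA, Lj] ** wm 4 [La] = wm 4 [La] ** wm 4 [LJ, LA, Lj, LA, LJ, LA, Lj]"
    by (rule comm_check) (simp_all add: wsimps)
  have c_a: "wm 4 [La] ** wm 4 [La] = wm 4 [La] ** wm 4 [La]"
    by (rule comm_check) (simp_all add: wsimps)
  have c_x: "wm 4 [LJ, La, Lj, La, Lj, La, LJ, LA, LJ, LA, Lj] ** wm 4 [La, Lj, Lj, La, LJ, LJ, La, Lj, La, LJ, LA, Lj, Lj, LA, LJ, LJ, La, Lj, Lj, La, LJ, LJ, La, Lj, La, LJ, LA, Lj, Lj, LA, LJ, LJ, La, Lj, Lj, La, LJ, LJ, La, Lj, La, LJ, LA, Lj, Lj, LA, LJ, LJ, La, Lj, Lj, La, LJ, LJ, La, Lj, La, LJ, LA, Lj, Lj, LA, LJ, LJ, La, Lj, Lj, La, LJ, LJ, La, Lj, La, LJ, LA, Lj, Lj, LA, LJ, LJ] = wm 4 [La, Lj, Lj, La, LJ, LJ, La, Lj, La, LJ, LA, Lj, Lj, LA, LJ, LJ, La, Lj, Lj, La, LJ, LJ, La, Lj, La, LJ, LA, Lj, Lj, LA, LJ, LJ, La, Lj, Lj, La, LJ, LJ, La, Lj, La, LJ, LA, Lj, Lj, LA, LJ, LJ, La, Lj, Lj, La, LJ, LJ, La, Lj, La, LJ,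 LA, Lj, Lj, LA, LJ, LJ, La, Lj, Lj, La, LJ, LJ, La, Lj, La, LJ, LA, Lj, Lj, LA, LJ, LJ] ** wm 4 [LJ, La, Lj, La, Lj, La, LJ, LA, LJ, LA, Lj]"
    by (rule comm_check) (simp_all add: wsimps)
  have c_z: "wm 4 [LJ, La, Lj, La, LJ, La, Lj] ** wm 4 [La] = wm 4 [La] ** wm 4 [LJ, La, Lj, La, LJ, La, Lj]"
    by (rule comm_check) (simp_all add: wsimps)
  have facs: "\<forall>f\<in>set [[LJ, La, Lj, La, Lj, La, LJ, LA, LJ, LA, Lj], [La], [LJ, La, Lj, La, Lj, La, LJ, LA, LJ, LA, Lj], [LJ, La, Lj, La, LJ, La, Lj], [LJ, LA, LJ, LA, Lj, La, Lj, LA, LJ, LA, LJ, LA, Lj, La, Lj, LA, LJ, LA, LJ], [LJ, LA, Lj, LA, LJ, LA, Lj], [LJ, La, Lj, La, Lj, LA, LJ, LA, LJ, LA, Lj], [LJ, La, Lj, La, LJ, La, Lj]]. wm 4 f ** wm 4 [La] = wm 4 [La] ** wm 4 f \<or> wm 4 f ** wm 4 [La, Lj, Lj, La, LJ, LJ, La, Lj, La, LJ, LA, Lj, Lj, LA, LJ, LJ, La, Lj, Lj, La, LJ, LJ, La, Lj, La, LJ, LA, Lj, Lj, LA, LJ, LJ, La, Lj, Lj, La, LJ, LJ, La, Lj, La, LJ, LA, Lj, Lj, LA, LJ, LJ, La, Lj, Lj, La, LJ, LJ, La, Lj, La, LJ, LA, Lj, Lj, LA, LJ, LJ, La, Lj,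 Lj, La, LJ, LJ, La, Lj, La, LJ, LA, Lj, Lj, LA, LJ, LJ] = wm 4 [La, Lj, Lj, La, LJ, LJ, La, Lj, La, LJ, LA, Lj, Lj, LA, LJ, LJ, La, Lj, Lj, La, LJ, LJ, La, Lj, La, LJ, LA, Lj, Lj, LA, LJ, LJ, La, Lj, Lj, La, LJ, LJ, La, Lj, La, LJ, LA, Lj, Lj, LA, LJ, LJ, La, Lj, Lj, La, LJ, LJ, La, Lj, La, LJ, LA, Lj, Lj, LA, LJ, LJ, La, Lj, Lj, La, LJ, LJ, La, Lj, La, LJ, LA, Lj, Lj, LA, LJ, LJ] ** wm 4 f"
    using c_GG c_XX c_ZZ c_a c_x c_z by simp
  have G: "wm 4 (concat [[LJ, La, Lj, La, Lj, La, LJ, LA, LJ, LA, Lj], [La], [LJ, La, Lj, La, Lj, La, LJ, LA, LJ, LA, Lj], [LJ, La, Lj, La, LJ, La, Lj], [LJ, LA, LJ, LA, Lj, La, Lj, LA, LJ, LA, LJ, LA, Lj, La, Lj, LA, LJ, LA, LJ], [LJ, LA, Lj, LA, LJ, LA, Lj], [LJ, La, Lj, La, Lj, LA, LJ, LA, LJ, LA, Lj], [LJ, La, Lj, La, LJ, La, Lj]]) \<in> gen_grp (stab (Sgrp 4 sigma5) (mirror (Hmat 4 sigma5) (wm 4 [La])) \<union> stab (Sgrp 4 sigma5) (mirror (Hmat 4 sigma5) (wm 4 [La, Lj, Lj, La, LJ, LJ, La, Lj, La, LJ, LA, Lj, Lj, LA, LJ, LJ, La, Lj, Lj, La, LJ,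 LJ, La, Lj, La, LJ, LA, Lj, Lj, LA, LJ, LJ, La, Lj, Lj, La, LJ, LJ, La, Lj, La, LJ, LA, Lj, Lj, LA, LJ, LJ, La, Lj, Lj, La, LJ, LJ, La, Lj, La, LJ, LA, Lj, Lj, LA, LJ, LJ, La, Lj, Lj, La, LJ, LJ, La, Lj, La, LJ, LA, Lj, Lj, LA, LJ, LJ])))"
    by (rule concat_gen[OF _ facs]) simp
  have f1: "[La] \<in> set [[LJ, La, Lj, La, Lj, La, LJ, LA, LJ, LA, Lj], [La], [LJ, La, Lj, La, Lj, La, LJ, LA, LJ, LA, Lj], [LJ, La, Lj, La, LJ, La, Lj], [LJ, LA, LJ, LA, Lj, La, Lj, LA, LJ, LA, LJ, LA, Lj, La, Lj, LA, LJ, LA, LJ], [LJ, LA, Lj, LA, LJ, LA, Lj], [LJ, La, Lj, La, Lj, LA, LJ, LA, LJ, LA, Lj], [LJ, La, Lj, La, LJ, La, Lj]]" by simp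
  have "wm 4 [La] \<in> gen_grp (stab (Sgrp 4 sigma5) (mirror (Hmat 4 sigma5) (wm 4 [La])) \<union> stab (Sgrp 4 sigma5) (mirror (Hmat 4 sigma5) (wm 4 [La, Lj, Lj, La, LJ, LJ, La, Lj, La, LJ, LA, Lj, Lj, LA, LJ, LJ, La, Lj, Lj, La, LJ, LJ, La, Lj, La, LJ, LA, Lj, Lj, LA, LJ, LJ, La, Lj, Lj, La, LJ, LJ, La, Lj, La, LJ, LA, Lj, Lj, LA, LJ, LJ, La, Lj, Lj, La, LJ, LJ, La, Lj, La, LJ, LA, Lj, Lj, LA, LJ, LJ, La, Lj, Lj, La, LJ, LJ, La, Lj, La, LJ, LA, Lj, Lj, LA, LJ, LJ])))"
    using concat_gen[of 4 "[[La]]" "wm 4 [La]" "wm 4 [La, Lj, Lj, La, LJ, LJ, La, Lj, La, LJ, LA, Lj, Lj, LA, LJ, LJ, La, Lj, Lj, La, LJ, LJ, La, Lj, La, LJ, LA, Lj, Lj, LA, LJ, LJ, La, Lj, Lj, La, LJ, LJ, La, Lj, La, LJ, LA, Lj, Lj, LA, LJ, LJ, La, Lj, Lj, La, LJ, LJ, La, Lj, La, LJ, LA, Lj, Lj, LA, LJ, LJ, La, Lj, Lj, La, LJ, LJ, La, Lj, La, LJ, LA, Lj, Lj, LA, LJ, LJ]"] by simp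
  then show "R1m 4 sigma5 \<in> gen_grp (stab (Sgrp 4 sigma5) (mirror (Hmat 4 sigma5) (wm 4 [La])) \<union> stab (Sgrp 4 sigma5) (mirror (Hmat 4 sigma5) (wm 4 [La, Lj, Lj, La, LJ, LJ, La, Lj, La, LJ, LA, Lj, Lj, LA, LJ, LJ, La, Lj, Lj, La, LJ, LJ, La, Lj, La, LJ, LA, Lj, Lj, LA, LJ, LJ, La, Lj, Lj, La, LJ, LJ, La, Lj, La, LJ, LA, Lj, Lj, LA, LJ, LJ, La, Lj, Lj, La, LJ, LJ, La, Lj, La, LJ, LA, Lj, Lj, LA, LJ, LJ, La, Lj, Lj, La, LJ, LJ, La, Lj, La, LJ, LA, Lj, Lj, LA, LJ, LJ])))"
    by (simp add: R1_w[of 4])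
  have "wm 4 [Lj] = wm 4 (concat [[LJ, La, Lj, La, Lj, La, LJ, LA, LJ, LA, Lj], [La], [LJ, La, Lj, La, Lj, La, LJ, LA, LJ, LA, Lj], [LJ, La, Lj, La, LJ, La, Lj], [LJ, LA, LJ, LA, Lj, La, Lj, LA, LJ, LA, LJ, LA, Lj, La, Lj, LA, LJ, LA, LJ], [LJ, LA, Lj, LA, LJ, LA, Lj], [LJ, La, Lj, La, Lj, LA, LJ, LA, LJ, LA, Lj], [LJ, La, Lj, La, LJ, La, Lj]] @ [Lj, Lj, Lj])"
    by (rule wm_ident) (simp_all add: wsimps)
  also have "\<dots> = wm 4 (concat [[LJ, La, Lj, La, Lj, La, LJ, LA, LJ, LA, Lj], [La], [LJ, La, Lj, La, Lj, La, LJ, LA, LJ, LA, Lj], [LJ, La, Lj, La, LJ, La, Lj], [LJ, LA, LJ, LA, Lj, La, Lj, LA, LJ, LA, LJ, LA, Lj, La, Lj, LA, LJ, LA, LJ], [LJ, LA, Lj, LA, LJ, LA, Lj], [LJ, La, Lj, La, Lj, LA, LJ, LA, LJ, LA, Lj], [LJ, La, Lj, La, LJ, La, Lj]])"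
    using J3 by (simp add: wm_append wm_def matrix_mul_assoc)
  finally show "Jm \<in> gen_grp (stab (Sgrp 4 sigma5) (mirror (Hmat 4 sigma5) (wm 4 [La])) \<union> stab (Sgrp 4 sigma5) (mirror (Hmat 4 sigma5) (wm 4 [La, Lj, Lj, La, LJ, LJ, La, Lj, La, LJ, LA, Lj, Lj, LA, LJ, LJ, La, Lj, Lj, La, LJ, LJ, La, Lj, La, LJ, LA, Lj, Lj, LA, LJ, LJ, La, Lj, Lj, La, LJ, LJ, La, Lj, La, LJ, LA, Lj, Lj, LA, LJ, LJ, La, Lj, Lj, La, LJ, LJ, La, Lj, La, LJ, LA, Lj, Lj, LA, LJ, LJ, La, Lj, Lj, La, LJ, LJ, La, Lj, La, LJ, LA, Lj, Lj, LA, LJ, LJ])))"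
    using G by (simp add: J_w[of 4])
qed

lemma case2:
  "gen_grp (stab (Sgrp 2 sigma5) (mirror (Hmat 2 sigma5) (wm 2 [La, Lj, La, Lj, La, Lj, La, Lj, La, Lj])) \<union> stab (Sgrp 2 sigma5) (mirror (Hmat 2 sigma5) (wm 2 [Lj, La, LJ, Lj, Lj, LA, LJ, LJ, Lj, LA, LJ, La, Lj, La, LJ, Lj, Lj, La, LJ, LJ, Lj, LA, LJ]))) = Sgrp 2 sigma5"
proof (rule gen_stab_eq)
  show p: "(2::nat) = 2 \<or> (2::nat) = 4" by simp
  show Tsub: "(stab (Sgrp 2 sigma5) (mirror (Hmat 2 sigma5) (wm 2 [La, Lj, La, Lj, La, Lj, La, Lj, La, Lj])) \<union> stab (Sgrp 2 sigma5) (mirror (Hmat 2 sigma5) (wm 2 [Lj, La, LJ, Lj, Lj, LA, LJ, LJ, Lj, LA, LJ, La, Lj, La, LJ, Lj, Lj, La, LJ, LJ, Lj, LA, LJ]))) \<subseteq> Sgrp 2 sigma5"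
    by (rule stabs_sub)
  have c_PP: "wm 2 [LJ, LA] ** wm 2 [La, Lj, La, Lj, La, Lj, La, Lj, La, Lj] = wm 2 [La, Lj, La, Lj, La, Lj, La, Lj, La, Lj] ** wm 2 [LJ, LA]"
    by (rule comm_check) (simp_all add: wsimps)
  have c_p: "wm 2 [La, Lj] ** wm 2 [La, Lj, La, Lj, La, Lj, La, Lj, La, Lj] = wm 2 [La, Lj, La, Lj, La, Lj, La, Lj, La, Lj] ** wm 2 [La, Lj]"
    by (rule comm_check) (simp_all add: wsimps)
  have c_r: "wm 2 [Lj, La, LJ, LJ, LA, Lj, Lj, LA, LJ, La, Lj, La, LJ, LJ, La, Lj, Lj, LA, LJ] ** wm 2 [Lj, La, LJ, Lj, Lj, LA, LJ, LJ, Lj, LA, LJ, La, Lj, La, LJ, Lj, Lj, La, LJ, LJ, Lj, LA, LJ] = wm 2 [Lj, La, LJ, Lj, Lj, LA, LJ, LJ, Lj, LA, LJ, La, Lj, La, LJ, Lj, Lj, La, LJ, LJ, Lj, LA, LJ] ** wm 2 [Lj, La, LJ, LJ, LA, Lj, Lj, LA, LJ, La, Lj, La, LJ, LJ, La, Lj, Lj, LA, LJ]"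
    by (rule comm_check) (simp_all add: wsimps)
  have c_y: "wm 2 [Lj, La, LJ, LJ, LA, Lj, Lj, LA, LJ, Lj, La, LJ, La, Lj, La, LJ, Lj, La, LJ, LJ, La, Lj, Lj, LA, LJ] ** wm 2 [Lj, La, LJ, Lj, Lj, LA, LJ, LJ, Lj, LA, LJ, La, Lj, La, LJ, Lj, Lj, La, LJ, LJ, Lj, LA, LJ] = wm 2 [Lj, La, LJ, Lj, Lj, LA, LJ, LJ, Lj, LA, LJ, La, Lj, La, LJ, Lj, Lj, La, LJ, LJ, Lj, LA, LJ] ** wm 2 [Lj, La, LJ, LJ, LA, Lj, Lj, LA, LJ, Lj, La, LJ, La, Lj, La, LJ, Lj, La, LJ, LJ, La, Lj, Lj, LA, LJ]"
    by (rule comm_check) (simp_all add: wsimps)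
  have c_z: "wm 2 [Lj, La, LJ, LJ, LA, Lj, Lj, LA, LJ, LJ, La, Lj, La, LJ, La, Lj, Lj, La, LJ, LJ, La, Lj, Lj, LA, LJ] ** wm 2 [Lj, La, LJ, Lj, Lj, LA, LJ, LJ, Lj, LA, LJ, La, Lj, La, LJ, Lj, Lj, La, LJ, LJ, Lj, LA, LJ] = wm 2 [Lj, La, LJ, Lj, Lj, LA, LJ, LJ, Lj, LA, LJ, La, Lj, La, LJ, Lj, Lj, La, LJ, LJ, Lj, LA, LJ] ** wm 2 [Lj, La, LJ, LJ, LA, Lj, Lj, LA, LJ, LJ, La, Lj, La, LJ, La, Lj, Lj, La, LJ, LJ, La, Lj, Lj, LA, LJ]"
    by (rule comm_check) (simp_all add: wsimps)
  have facs: "\<forall>f\<in>set [[Lj, La, LJ, LJ, LA, Lj, Lj, LA, LJ, Lj, La, LJ, La, Lj, La, LJ, Lj, La, LJ, LJ, La, Lj, Lj, LA, LJ], [La, Lj], [La, Lj], [Lj, La, LJ, LJ, LA, Lj, Lj, LA, LJ, LJ, La, Lj, La, LJ, La, Lj, Lj, La, LJ, LJ, La, Lj, Lj, LA, LJ], [LJ, LA], [LJ, LA], [Lj, La, LJ, LJ, LA, Lj, Lj, LA, LJ, La, Lj, La, LJ, LJ, La, Lj, Lj, LA, LJ], [La, Lj], [La, Lj], [Lj, La, LJ, LJ, LA, Lj, Lj, LA, LJ, LJ, La, Lj, La, LJ, La, Lj, Lj, La, LJ, LJ, La, Lj, Lj, LA, LJ], [LJ, LA], [LJ, LA], [Lj,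 La, LJ, LJ, LA, Lj, Lj, LA, LJ, Lj, La, LJ, La, Lj, La, LJ, Lj, La, LJ, LJ, La, Lj, Lj, LA, LJ]]. wm 2 f ** wm 2 [La, Lj, La, Lj, La, Lj, La, Lj, La, Lj] = wm 2 [La, Lj, La, Lj, La, Lj, La, Lj, La, Lj] ** wm 2 f \<or> wm 2 f ** wm 2 [Lj, La, LJ, Lj, Lj, LA, LJ, LJ, Lj, LA, LJ, La, Lj, La, LJ, Lj, Lj, La, LJ, LJ, Lj, LA, LJ] = wm 2 [Lj, La, LJ, Lj, Lj, LA, LJ, LJ, Lj, LA, LJ, La, Lj, La, LJ, Lj, Lj, La, LJ, LJ, Lj, LA, LJ] ** wm 2 f"
    using c_PP c_p c_r c_y c_z by simp
  have G: "wm 2 (concat [[Lj, La, LJ, LJ, LA, Lj, Lj, LA, LJ, Lj, La, LJ, La, Lj, La, LJ, Lj, La, LJ, LJ, La, Lj, Lj, LA, LJ], [La, Lj], [La, Lj], [Lj, La, LJ, LJ, LA, Lj, Lj, LA, LJ, LJ, La, Lj, La, LJ, La, Lj, Lj, La, LJ, LJ, La, Lj, Lj, LA, LJ], [LJ, LA], [LJ, LA], [Lj, La, LJ, LJ, LA, Lj, Lj, LA, LJ, La, Lj, La, LJ, LJ, La, Lj, Lj, LA, LJ], [La, Lj], [La, Lj], [Lj, La, LJ, LJ, LA, Lj, Lj, LA, LJ, LJ, La, Lj, La, LJ, La, Lj, Lj, La, LJ, LJ, La, Lj, Lj, LA, LJ], [LJ, LA], [LJ, LA], [Lj, La, LJ,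 LJ, LA, Lj, Lj, LA, LJ, Lj, La, LJ, La, Lj, La, LJ, Lj, La, LJ, LJ, La, Lj, Lj, LA, LJ]]) \<in> gen_grp (stab (Sgrp 2 sigma5) (mirror (Hmat 2 sigma5) (wm 2 [La, Lj, La, Lj, La, Lj, La, Lj, La, Lj])) \<union> stab (Sgrp 2 sigma5) (mirror (Hmat 2 sigma5) (wm 2 [Lj, La, LJ, Lj, Lj, LA, LJ, LJ, Lj, LA, LJ, La, Lj, La, LJ, Lj, Lj, La, LJ, LJ, Lj, LA, LJ])))"
    by (rule concat_gen[OF _ facs]) simp
  have "wm 2 [La] = wm 2 (concat [[Lj, La, LJ, LJ, LA, Lj, Lj, LA, LJ, Lj, La, LJ, La, Lj, La, LJ, Lj, La, LJ, LJ, La, Lj, Lj, LA, LJ], [La, Lj], [La, Lj], [Lj, La, LJ, LJ, LA, Lj, Lj, LA, LJ, LJ, La, Lj, La, LJ, La, Lj, Lj, La, LJ, LJ, La, Lj, Lj, LA, LJ], [LJ, LA], [LJ, LA], [Lj, La, LJ, LJ, LA, Lj, Lj, LA, LJ, La, Lj, La, LJ, LJ, La, Lj, Lj, LA, LJ], [La, Lj], [La, Lj], [Lj, La, LJ, LJ, LA, Lj, Lj, LA, LJ, LJ, La, Lj, La, LJ, La, Lj, Lj, La, LJ, LJ, La, Lj, Lj, LA, LJ], [LJ, LA], [LJ, LA], [Lj, La, LJ, LJ, LA, Lj, Lj, LA, LJ, Lj, La, LJ, La, Lj, La, LJ, Lj, La, LJ, LJ, La, Lj, Lj, LA, LJ]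])"
    by (rule wm_ident) (simp_all add: wsimps)
  then have r: "R1m 2 sigma5 \<in> gen_grp (stab (Sgrp 2 sigma5) (mirror (Hmat 2 sigma5) (wm 2 [La, Lj, La, Lj, La, Lj, La, Lj, La, Lj])) \<union> stab (Sgrp 2 sigma5) (mirror (Hmat 2 sigma5) (wm 2 [Lj, La, LJ, Lj, Lj, LA, LJ, LJ, Lj, LA, LJ, La, Lj, La, LJ, Lj, Lj, La, LJ, LJ, Lj, LA, LJ])))"
    using G by (simp add: R1_w[of 2])
  show "R1m 2 sigma5 \<in> gen_grp (stab (Sgrp 2 sigma5) (mirror (Hmat 2 sigma5) (wm 2 [La, Lj, La, Lj, La, Lj, La, Lj, La, Lj])) \<union> stab (Sgrp 2 sigma5) (mirror (Hmat 2 sigma5) (wm 2 [Lj, La, LJ, Lj, Lj, LA, LJ, LJ, Lj, LA, LJ, La, Lj, La, LJ, Lj, Lj, La, LJ, LJ, Lj, LA, LJ])))" by (rule r)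
  have Tinv: "\<forall>g\<in>(stab (Sgrp 2 sigma5) (mirror (Hmat 2 sigma5) (wm 2 [La, Lj, La, Lj, La, Lj, La, Lj, La, Lj])) \<union> stab (Sgrp 2 sigma5) (mirror (Hmat 2 sigma5) (wm 2 [Lj, La, LJ, Lj, Lj, LA, LJ, LJ, Lj, LA, LJ, La, Lj, La, LJ, Lj, Lj, La, LJ, LJ, Lj, LA, LJ]))). invertible g" using Tsub Sgrp_props[OF p] by blast
  have ri: "matrix_inv (R1m 2 sigma5) \<in> gen_grp (stab (Sgrp 2 sigma5) (mirror (Hmat 2 sigma5) (wm 2 [La, Lj, La, Lj, La, Lj, La, Lj, La, Lj])) \<union> stab (Sgrp 2 sigma5) (mirror (Hmat 2 sigma5) (wm 2 [Lj, La, LJ, Lj, Lj, LA, LJ, LJ, Lj, LA, LJ, La, Lj, La, LJ, Lj, Lj, La, LJ, LJ, Lj, LA, LJ])))"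
    using gen_inv_closed[OF Tinv r] by blast
  have "wm 2 (concat [[La, Lj]]) \<in> gen_grp (stab (Sgrp 2 sigma5) (mirror (Hmat 2 sigma5) (wm 2 [La, Lj, La, Lj, La, Lj, La, Lj, La, Lj])) \<union> stab (Sgrp 2 sigma5) (mirror (Hmat 2 sigma5) (wm 2 [Lj, La, LJ, Lj, Lj, LA, LJ, LJ, Lj, LA, LJ, La, Lj, La, LJ, Lj, Lj, La, LJ, LJ, Lj, LA, LJ])))"
    by (rule concat_gen) (simp_all add: c_p)
  then have pg: "R1m 2 sigma5 ** Jm \<in> gen_grp (stab (Sgrp 2 sigma5) (mirror (Hmat 2 sigma5) (wm 2 [La, Lj, La, Lj, La, Lj, La, Lj, La, Lj])) \<union> stab (Sgrp 2 sigma5) (mirror (Hmat 2 sigma5) (wm 2 [Lj, La, LJ, Lj, Lj, LA, LJ, LJ, Lj, LA, LJ, La, Lj, La, LJ, Lj, Lj, La, LJ, LJ, Lj, LA, LJ])))"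
    by (simp add: wm_def)
  have "Jm = matrix_inv (R1m 2 sigma5) ** (R1m 2 sigma5 ** Jm)"
    using inv_props(2)[OF R1_inv_ok[OF p]] by (simp add: matrix_mul_assoc)
  then show "Jm \<in> gen_grp (stab (Sgrp 2 sigma5) (mirror (Hmat 2 sigma5) (wm 2 [La, Lj, La, Lj, La, Lj, La, Lj, La, Lj])) \<union> stab (Sgrp 2 sigma5) (mirror (Hmat 2 sigma5) (wm 2 [Lj, La, LJ, Lj, Lj, LA, LJ, LJ, Lj, LA, LJ, La, Lj, La, LJ, Lj, Lj, La, LJ, LJ, Lj, LA, LJ])))"
    using gen_mult_closed[OF ri pg] by simp
qed

lemma e2a: "mpow (R1m 2 sigma5 ** Jm) 5 = wm 2 [La, Lj, La, Lj, La, Lj, La, Lj, La, Lj]"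
  by (simp add: R1_w[of 2] J_w[of 2] R2_w[of 2] R3_w[of 2] wm_inv invw_def wm_app_rev mpow5)
lemma e2b: "R2m 2 sigma5 ** matrix_inv (R3m 2 sigma5) ** matrix_inv (R2m 2 sigma5) ** R1m 2 sigma5 ** R2m 2 sigma5 ** R3m 2 sigma5 ** matrix_inv (R2m 2 sigma5) = wm 2 [Lj, La, LJ, Lj, Lj, LA, LJ, LJ, Lj, LA, LJ, La, Lj, La, LJ, Lj, Lj, La, LJ, LJ, Lj, LA, LJ]"
  by (simp add: R1_w[of 2] J_w[of 2] R2_w[of 2] R3_w[of 2] wm_inv invw_def wm_app_rev mpow5)
lemma e2c: "R1m 2 sigma5 = wm 2 [La]" by (rule R1_w)
lemma e4_1: "mpow (R1m 4 sigma5 ** R2m 4 sigma5 ** R3m 4 sigma5 ** matrix_inv (R2m 4 sigma5)) 5 = wm 4 [La, Lj, La, LJ, Lj, Lj, La, LJ, LJ, Lj, LA, LJ, La, Lj, La, LJ, Lj, Lj, La, LJ, LJ, Lj, LA, LJ, La, Lj, La, LJ, Lj, Lj, La, LJ, LJ, Lj, LA, LJ, La, Lj, La, LJ, Lj, Lj, La, LJ, LJ, Lj, LA, LJ, La, Lj, La, LJ, Lj, Lj, La, LJ, LJ, Lj, LA, LJ]"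
  by (simp add: R1_w[of 4] J_w[of 4] R2_w[of 4] R3_w[of 4] wm_inv invw_def wm_app_rev mpow5)
lemma e4_2: "mpow (R1m 4 sigma5 ** matrix_inv (R3m 4 sigma5) ** R2m 4 sigma5 ** R3m 4 sigma5) 5 = wm 4 [La, Lj, Lj, LA, LJ, LJ, Lj, La, LJ, Lj, Lj, La, LJ, LJ, La, Lj, Lj, LA, LJ, LJ, Lj, La, LJ, Lj, Lj, La, LJ, LJ, La, Lj, Lj, LA, LJ, LJ, Lj, La, LJ, Lj, Lj, La, LJ, LJ, La, Lj, Lj, LA, LJ, LJ, Lj, La, LJ, Lj, Lj, La, LJ, LJ, La, Lj, Lj, LA, LJ, LJ, Lj, La, LJ, Lj, Lj, La, LJ, LJ]"
  by (simp add: R1_w[of 4] J_w[of 4] R2_w[of 4] R3_w[of 4] wm_inv invw_def wm_app_rev mpow5)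
lemma e4_3: "mpow (R1m 4 sigma5 ** matrix_inv (R2m 4 sigma5) ** matrix_inv (R1m 4 sigma5) ** R3m 4 sigma5 ** R1m 4 sigma5 ** R2m 4 sigma5) 5 = wm 4 [La, Lj, LA, LJ, LA, Lj, Lj, La, LJ, LJ, La, Lj, La, LJ, La, Lj, LA, LJ, LA, Lj, Lj, La, LJ, LJ, La, Lj, La, LJ, La, Lj, LA, LJ, LA, Lj, Lj, La, LJ, LJ, La, Lj, La, LJ, La, Lj, LA, LJ, LA, Lj, Lj, La, LJ, LJ, La, Lj, La, LJ, La, Lj, LA, LJ, LA, Lj, Lj, La, LJ, LJ, La, Lj, La, LJ]"
  by (simp add: R1_w[of 4] J_w[of 4] R2_w[of 4] R3_w[of 4] wm_inv invw_def wm_app_rev mpow5)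
lemma e4_4: "mpow (R1m 4 sigma5 ** R3m 4 sigma5 ** R1m 4 sigma5 ** R2m 4 sigma5 ** matrix_inv (R1m 4 sigma5) ** matrix_inv (R3m 4 sigma5)) 5 = wm 4 [La, Lj, Lj, La, LJ, LJ, La, Lj, La, LJ, LA, Lj, Lj, LA, LJ, LJ, La, Lj, Lj, La, LJ, LJ, La, Lj, La, LJ, LA, Lj, Lj, LA, LJ, LJ, La, Lj, Lj, La, LJ, LJ, La, Lj, La, LJ, LA, Lj, Lj, LA, LJ, LJ, La, Lj, Lj, La, LJ, LJ, La, Lj, La, LJ, LA, Lj, Lj, LA, LJ, LJ, La, Lj, Lj, La, LJ, LJ, La, Lj, La, LJ, LA, Lj, Lj, LA, LJ, LJ]"
  by (simp add: R1_w[of 4] J_w[of 4] R2_w[of 4] R3_w[of 4] wm_inv invw_def wm_app_rev mpow5)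

theorem theorem11p2:
  shows "(let \<tau> = sigma5; H = Hmat 2 \<tau>; \<Gamma> = Sgrp 2 \<tau>;
              R1 = R1m 2 \<tau>; R2 = R2m 2 \<tau>; R3 = R3m 2 \<tau>;
              P = R1 ** Jm;
              B = R2 ** matrix_inv R3 ** matrix_inv R2 ** R1 ** R2 ** R3 ** matrix_inv R2
          in gen_grp (stab \<Gamma> (mirror H (mpow P 5)) \<union> stab \<Gamma> (mirror H B)) = \<Gamma>)
       \<and> (let \<tau> = sigma5; H = Hmat 4 \<tau>; \<Gamma> = Sgrp 4 \<tau>;
              R1 = R1m 4 \<tau>; R2 = R2m 4 \<tau>; R3 = R3m 4 \<tau>
          in \<forall>A \<in> {mpow (R1 ** R2 ** R3 ** matrix_inv R2) 5,
                    mpow (R1 ** matrix_inv R3 ** R2 ** R3) 5,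
                    mpow (R1 ** matrix_inv R2 ** matrix_inv R1 ** R3 ** R1 ** R2) 5,
                    mpow (R1 ** R3 ** R1 ** R2 ** matrix_inv R1 ** matrix_inv R3) 5}.
               gen_grp (stab \<Gamma> (mirror H R1) \<union> stab \<Gamma> (mirror H A)) = \<Gamma>)"
proof -
  have i: "gen_grp (stab (Sgrp 2 sigma5) (mirror (Hmat 2 sigma5) (mpow (R1m 2 sigma5 ** Jm) 5)) \<union> stab (Sgrp 2 sigma5) (mirror (Hmat 2 sigma5) (R2m 2 sigma5 ** matrix_inv (R3m 2 sigma5) ** matrix_inv (R2m 2 sigma5) ** R1m 2 sigma5 ** R2m 2 sigma5 ** R3m 2 sigma5 ** matrix_inv (R2m 2 sigma5)))) = Sgrp 2 sigma5"
    unfolding e2a e2b by (rule case2)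
  have ii1: "gen_grp (stab (Sgrp 4 sigma5) (mirror (Hmat 4 sigma5) (R1m 4 sigma5)) \<union> stab (Sgrp 4 sigma5) (mirror (Hmat 4 sigma5) (mpow (R1m 4 sigma5 ** R2m 4 sigma5 ** R3m 4 sigma5 ** matrix_inv (R2m 4 sigma5)) 5))) = Sgrp 4 sigma5"
    unfolding e4_1 unfolding R1_w[of 4] by (rule case4_1)
  have ii2: "gen_grp (stab (Sgrp 4 sigma5) (mirror (Hmat 4 sigma5) (R1m 4 sigma5)) \<union> stab (Sgrp 4 sigma5) (mirror (Hmat 4 sigma5) (mpow (R1m 4 sigma5 ** matrix_inv (R3m 4 sigma5) ** R2m 4 sigma5 ** R3m 4 sigma5) 5))) = Sgrp 4 sigma5"
    unfolding e4_2 unfolding R1_w[of 4] by (rule case4_2)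
  have ii3: "gen_grp (stab (Sgrp 4 sigma5) (mirror (Hmat 4 sigma5) (R1m 4 sigma5)) \<union> stab (Sgrp 4 sigma5) (mirror (Hmat 4 sigma5) (mpow (R1m 4 sigma5 ** matrix_inv (R2m 4 sigma5) ** matrix_inv (R1m 4 sigma5) ** R3m 4 sigma5 ** R1m 4 sigma5 ** R2m 4 sigma5) 5))) = Sgrp 4 sigma5"
    unfolding e4_3 unfolding R1_w[of 4] by (rule case4_3)
  have ii4: "gen_grp (stab (Sgrp 4 sigma5) (mirror (Hmat 4 sigma5) (R1m 4 sigma5)) \<union> stab (Sgrp 4 sigma5) (mirror (Hmat 4 sigma5) (mpow (R1m 4 sigma5 ** R3m 4 sigma5 ** R1m 4 sigma5 ** R2m 4 sigma5 ** matrix_inv (R1m 4 sigma5) ** matrix_inv (R3m 4 sigma5)) 5))) = Sgrp 4 sigma5"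
    unfolding e4_4 unfolding R1_w[of 4] by (rule case4_4)
  show ?thesis unfolding Let_def using i ii1 ii2 ii3 ii4 by simp
qed

end
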